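(* Let $1\le p<2$, let $k\ge 1$ and let $\mathfrak{h}$ be any Lie algebra of $k\times k$ complex matrices containing $\mathfrak{t}(k,\mathbb{R})$. Let $\gamma_1,\gamma_2:[0,T]\to\mathbb{R}^d$ be paths of bounded $p$-variation whose signatures differ at the $n$-th level, i.e. $\pi_n[S(\gamma_1)]\neq\pi_n[S(\gamma_2)]$, and suppose $k\ge n+1$. Then there exists $M\in\mathcal{L}(\mathbb{R}^d;\mathfrak{h})$ such that $\mathscr{D}_{\gamma_1}(M)\neq\mathscr{D}_{\gamma_2}(M)$.
   Context: $\mathfrak{t}(k,\mathbb{R})$ is the space of real $k\times k$ antisymmetric matrices whose $(i,j)$-entry can be nonzero only if $|i-j|=1$. For a path $\gamma$ of bounded $p$-variation, $1\le p<2$, its signature is $S(\gamma)=(1,\gamma^{(1)},\gamma^{(2)},\dots)$ with $\pi_n[S(\gamma)]=\gamma^{(n)}=\int_{0<t_1<\cdots<t_n<T}d\gamma_{t_1}\otimes\cdots\otimes d\gamma_{t_n}\in(\mathbb{R}^d)^{\otimes n}$ (Young integrals). The (Cartan) development of $\gamma$ evaluated at a linear map $M:\mathbb{R}^d\to\mathfrak{h}$ is the matrix $\mathscr{D}_\gamma(M)=I_k+\sum_{n\ge1}\int_{0<t_1<\cdots<t_n<T}M(d\gamma_{t_1})\cdots M(d\gamma_{t_n})$ (matrix products, Young integrals). *)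

theory Defs
  imports "HOL-Analysis.Analysis"
begin

section \<open>Partitions of an interval\<close>

text \<open>A partition of [a,b] is a strictly increasing list a = t0 < t1 < ... < tm = b.\<close>
definition is_partition :: "real \<Rightarrow> real \<Rightarrow> real list \<Rightarrow> bool" where
  "is_partition a b ts \<longleftrightarrow> ts \<noteq> [] \<and> hd ts = a \<and> last ts = b \<and> sorted_wrt (<) ts"

text \<open>Consecutive pairs (t_i, t_(i+1)) of a partition.\<close>
definition intervals_of :: "real list \<Rightarrow> (real \<times> real) list" where
  "intervals_of ts = zip ts (tl ts)"

definition mesh :: "real list \<Rightarrow> real" where
  "mesh ts = Max (insert 0 (set (map (\<lambda>(s,t). t - s) (intervals_of ts))))"

section \<open>Bounded p-variation\<close>

definition bounded_p_variation ::
  "real \<Rightarrow> (real \<Rightarrow> 'a::real_normed_vector) \<Rightarrow> real \<Rightarrow> real \<Rightarrow> bool" where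
  "bounded_p_variation p \<gamma> a b \<longleftrightarrow>
     (\<exists>C. \<forall>ts. is_partition a b ts \<longrightarrow>
        (\<Sum>(s,t)\<leftarrow>intervals_of ts. norm (\<gamma> t - \<gamma> s) powr p) \<le> C)"

section \<open>Young (Riemann--Stieltjes) integrals\<close>

text \<open>The Young integral of f against g over [a,b], with respect to a bilinear product
  bil, defined as the limit of Riemann--Stieltjes sums (left-point evaluation) as the mesh
  of the partition tends to zero.\<close>
definition has_young_integral ::
  "('a \<Rightarrow> 'b::ab_group_add \<Rightarrow> 'c::real_normed_vector) \<Rightarrow> (real \<Rightarrow> 'a) \<Rightarrow> (real \<Rightarrow> 'b)
    \<Rightarrow> real \<Rightarrow> real \<Rightarrow> 'c \<Rightarrow> bool" where
  "has_young_integral bil f g a b I \<longleftrightarrow>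
     (\<forall>e>0. \<exists>\<delta>>0. \<forall>ts. is_partition a b ts \<and> mesh ts < \<delta> \<longrightarrow>
        dist (\<Sum>(s,t)\<leftarrow>intervals_of ts. bil (f s) (g t - g s)) I < e)"

definition young_integral ::
  "('a \<Rightarrow> 'b::ab_group_add \<Rightarrow> 'c::real_normed_vector) \<Rightarrow> (real \<Rightarrow> 'a) \<Rightarrow> (real \<Rightarrow> 'b)
    \<Rightarrow> real \<Rightarrow> real \<Rightarrow> 'c" where
  "young_integral bil f g a b = (THE I. has_young_integral bil f g a b I)"

section \<open>Signature\<close>

text \<open>Coordinates of the signature. The n-th level tensor is represented by its coordinates
  indexed by words of length n over the index type 'd of the coordinates of R^d.
  sig_rev \<gamma> (rev w) t is the coordinate
  \<integral>_{0<t1<...<tn<t} d\<gamma>^{w1}_{t1} ... d\<gamma>^{wn}_{tn}, defined recursively: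
  X^{w @ [i]}_t = \<integral>_0^t X^w_s d\<gamma>^i_s (Young integral).\<close>
fun sig_rev :: "(real \<Rightarrow> real^'d) \<Rightarrow> 'd list \<Rightarrow> real \<Rightarrow> real" where
  "sig_rev \<gamma> [] t = 1"
| "sig_rev \<gamma> (i # v) t = young_integral (*) (sig_rev \<gamma> v) (\<lambda>s. \<gamma> s $ i) 0 t"

definition sig_coord :: "(real \<Rightarrow> real^'d) \<Rightarrow> real \<Rightarrow> 'd list \<Rightarrow> real" where
  "sig_coord \<gamma> T w = sig_rev \<gamma> (rev w) T"

text \<open>pi_n[S(\<gamma>)] as an element of (R^d)^{\<otimes>n}, given by its coordinates on words of length n.\<close>
definition sig_level :: "(real \<Rightarrow> real^'d) \<Rightarrow> real \<Rightarrow> nat \<Rightarrow> ('d list \<Rightarrow> real)" where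
  "sig_level \<gamma> T n = (\<lambda>w. if length w = n then sig_coord \<gamma> T w else 0)"

section \<open>Cartan development\<close>

text \<open>n-th term \<integral>_{0<t1<...<tn<t} M(d\<gamma>_{t1}) ... M(d\<gamma>_{tn}), defined recursively
  by Y_0(t) = I and Y_{n+1}(t) = \<integral>_0^t Y_n(s) M(d\<gamma>_s) (Young integral, matrix product).\<close>
fun dev_term :: "(real^'d \<Rightarrow> complex^'k^'k) \<Rightarrow> (real \<Rightarrow> real^'d) \<Rightarrow> nat \<Rightarrow> real \<Rightarrow> complex^'k^'k" where
  "dev_term M \<gamma> 0 t = mat 1"
| "dev_term M \<gamma> (Suc n) t = young_integral (**) (dev_term M \<gamma> n) (\<lambda>s. M (\<gamma> s)) 0 t"

definition development :: "(real \<Rightarrow> real^'d) \<Rightarrow> real \<Rightarrow> (real^'d \<Rightarrow> complex^'k^'k) \<Rightarrow> complex^'k^'k" where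
  "development \<gamma> T M = (\<Sum>n. dev_term M \<gamma> n T)"

section \<open>Matrix Lie algebras\<close>

text \<open>Position of an index in the (finite, linearly ordered) index type, 0-based.\<close>
definition idx_pos :: "'k::{finite,linorder} \<Rightarrow> nat" where
  "idx_pos i = card {j. j < i}"

text \<open>t(k,R): real antisymmetric k x k matrices, nonzero only on the first off-diagonals,
  viewed as complex matrices.\<close>
definition tk_real :: "((complex, 'k::{finite,linorder}) vec, 'k) vec set" where
  "tk_real = {A.
      (\<forall>i j. Im (A $ i $ j) = 0 \<and> A $ i $ j = - (A $ j $ i) \<and>
             (A $ i $ j \<noteq> 0 \<longrightarrow> idx_pos i = idx_pos j + 1 \<or> idx_pos j = idx_pos i + 1))}"

text \<open>A (real) Lie algebra of complex matrices: a real subspace closed under commutators.\<close>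
definition matrix_lie_algebra :: "(complex^'k^'k) set \<Rightarrow> bool" where
  "matrix_lie_algebra h \<longleftrightarrow> subspace h \<and> (\<forall>A\<in>h. \<forall>B\<in>h. A ** B - B ** A \<in> h)"

end

theory Submission
  imports Defs
begin

(* ---- part P1 ---- *)
lemma intervals_of_simps[simp]:
  "intervals_of [] = []" "intervals_of [x] = []"
  "intervals_of (x # y # zs) = (x, y) # intervals_of (y # zs)"
  by (simp_all add: intervals_of_def)

lemma intervals_of_Cons: "ys \<noteq> [] \<Longrightarrow> intervals_of (x # ys) = (x, hd ys) # intervals_of ys"
  by (cases ys) auto

lemma intervals_of_append:
  "xs \<noteq> [] \<Longrightarrow> ys \<noteq> [] \<Longrightarrow> last xs = hd ys \<Longrightarrow>
   intervals_of (xs @ tl ys) = intervals_of xs @ intervals_of ys"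
proof (induction xs)
  case Nil then show ?case by simp
next
  case (Cons x xs)
  show ?case
  proof (cases "xs = []")
    case True
    then show ?thesis using Cons.prems by (cases ys) (auto simp: intervals_of_Cons)
  next
    case False
    then have "xs @ tl ys \<noteq> []" by simp
    then show ?thesis using Cons False by (simp add: intervals_of_Cons)
  qed
qed

lemma intervals_of_remove:
  "intervals_of (xs @ [u, v, w] @ ys) = intervals_of (xs @ [u]) @ [(u,v),(v,w)] @ intervals_of (w # ys)"
  "intervals_of (xs @ [u, w] @ ys) = intervals_of (xs @ [u]) @ [(u,w)] @ intervals_of (w # ys)"
proof (induction xs)
  case Nil
  { case 1 show ?case by simp }
  { case 2 show ?case by simp }
next
  case (Cons x xs)
  { case 1 show ?case using Cons(1) by (simp add: intervals_of_Cons) (cases xs; simp) }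
  { case 2 show ?case using Cons(2) by (simp add: intervals_of_Cons) (cases xs; simp) }
qed

lemma set_intervals_of: "(s,t) \<in> set (intervals_of xs) \<Longrightarrow> s \<in> set xs \<and> t \<in> set xs"
  by (induction xs rule: induct_list012) auto

lemma sorted_intervals_of: "sorted_wrt (<) xs \<Longrightarrow> (s,t) \<in> set (intervals_of xs) \<Longrightarrow> s < t"
  by (induction xs rule: induct_list012) auto

lemma is_partition_set: "is_partition a b ts \<Longrightarrow> x \<in> set ts \<Longrightarrow> a \<le> x \<and> x \<le> b"
proof -
  assume P: "is_partition a b ts" and x: "x \<in> set ts"
  have s: "sorted_wrt (<) ts" "ts \<noteq> []" "hd ts = a" "last ts = b" using P by (auto simp: is_partition_def)
  then obtain y ys where ts: "ts = y # ys" by (cases ts) auto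
  have "a \<le> x" using s x ts by (auto)
  moreover have "x \<le> b"
  proof -
    have "ts = butlast ts @ [last ts]" using s(2) by simp
    then have "sorted_wrt (<) (butlast ts @ [b])" using s by simp
    moreover have "x \<in> set (butlast ts @ [b])" using x \<open>ts = butlast ts @ [last ts]\<close> s by metis
    ultimately show ?thesis by (auto simp: sorted_wrt_append)
  qed
  ultimately show ?thesis by simp
qed

lemma is_partition_le: "is_partition a b ts \<Longrightarrow> a \<le> b"
proof -
  assume P: "is_partition a b ts"
  then have "hd ts \<in> set ts" "hd ts = a" by (auto simp: is_partition_def)
  then show ?thesis using is_partition_set[OF P, of a] by simp
qed

lemma sorted_last_ge: "sorted_wrt (<) (xs::real list) \<Longrightarrow> x \<in> set xs \<Longrightarrow> x \<le> last xs"
proof (induction xs)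
  case (Cons y ys)
  show ?case
  proof (cases "ys = []")
    case True with Cons show ?thesis by simp
  next
    case False
    then have "last ys \<in> set ys" by simp
    then have "y < last ys" using Cons.prems(1) by simp
    show ?thesis
    proof (cases "x = y")
      case True then show ?thesis using \<open>y < last ys\<close> \<open>ys \<noteq> []\<close> by simp
    next
      case False then have "x \<in> set ys" using Cons.prems(2) by simp
      then have "x \<le> last ys" using Cons.IH Cons.prems(1) by simp
      then show ?thesis using \<open>ys \<noteq> []\<close> by simp
    qed
  qed
qed simp

lemma sorted_hd_le: "sorted_wrt (<) (xs::real list) \<Longrightarrow> x \<in> set xs \<Longrightarrow> hd xs \<le> x"
  by (cases xs) auto

lemma is_partition_append:
  "is_partition a c xs \<Longrightarrow> is_partition c b ys \<Longrightarrow> is_partition a b (xs @ tl ys)"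
proof -
  assume A: "is_partition a c xs" "is_partition c b ys"
  obtain zs where ys: "ys = c # zs" using A(2) by (cases ys) (auto simp: is_partition_def)
  have "\<forall>x\<in>set xs. x \<le> c" using A(1) is_partition_set by blast
  moreover have "\<forall>y\<in>set zs. c < y" "sorted_wrt (<) zs" using A(2) ys by (auto simp: is_partition_def)
  ultimately have "sorted_wrt (<) (xs @ zs)" using A(1) by (force simp: is_partition_def sorted_wrt_append)
  moreover have "last (xs @ zs) = b"
  proof (cases "zs = []")
    case True
    then show ?thesis using A ys by (simp add: is_partition_def)
  next
    case False
    then show ?thesis using A ys by (simp add: is_partition_def)
  qed
  ultimately show ?thesis using A(1) ys by (auto simp: is_partition_def)
qed

definition seg :: "real \<Rightarrow> real \<Rightarrow> real list" where
  "seg a b = (if a < b then [a, b] else [a])"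

lemma is_partition_seg: "a \<le> b \<Longrightarrow> is_partition a b (seg a b)"
  by (auto simp: seg_def is_partition_def)

lemma is_partition_single: "is_partition a a ts \<longleftrightarrow> ts = [a]"
proof
  assume P: "is_partition a a ts"
  then obtain y ys where ts: "ts = y # ys" by (cases ts) (auto simp: is_partition_def)
  show "ts = [a]"
  proof (cases "ys = []")
    case False
    then have "last ts \<in> set ys" using ts by simp
    then have "y < last ts" using P ts by (auto simp: is_partition_def)
    then show ?thesis using P ts by (auto simp: is_partition_def)
  qed (use P ts in \<open>auto simp: is_partition_def\<close>)
qed (auto simp: is_partition_def)

lemma mesh_lt: "0 < d \<Longrightarrow> mesh ts < d \<longleftrightarrow> (\<forall>(s,t)\<in>set (intervals_of ts). t - s < d)"
  by (auto simp: mesh_def)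

lemma mesh_nonneg: "0 \<le> mesh ts" by (auto simp: mesh_def)

lemma mesh_le: "(\<forall>(s,t)\<in>set (intervals_of ts). t - s \<le> d) \<Longrightarrow> 0 \<le> d \<Longrightarrow> mesh ts \<le> d"
  by (auto simp: mesh_def)

(* ---- part P2 ---- *)
definition superadd :: "(real \<Rightarrow> real \<Rightarrow> real) \<Rightarrow> real \<Rightarrow> real \<Rightarrow> bool" where
  "superadd \<omega> a b \<longleftrightarrow> (\<forall>s u t. a \<le> s \<and> s \<le> u \<and> u \<le> t \<and> t \<le> b \<longrightarrow> \<omega> s u + \<omega> u t \<le> \<omega> s t)
      \<and> (\<forall>s t. a \<le> s \<and> s \<le> t \<and> t \<le> b \<longrightarrow> 0 \<le> \<omega> s t)"

lemma superaddD:
  assumes "superadd \<omega> a b"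
  shows "\<And>s u t. a \<le> s \<Longrightarrow> s \<le> u \<Longrightarrow> u \<le> t \<Longrightarrow> t \<le> b \<Longrightarrow> \<omega> s u + \<omega> u t \<le> \<omega> s t"
    and "\<And>s t. a \<le> s \<Longrightarrow> s \<le> t \<Longrightarrow> t \<le> b \<Longrightarrow> 0 \<le> \<omega> s t"
  using assms by (auto simp: superadd_def)

lemma superadd_mono:
  assumes "superadd \<omega> a b" "a \<le> s" "s \<le> s'" "s' \<le> t'" "t' \<le> t" "t \<le> b"
  shows "\<omega> s' t' \<le> \<omega> s t"
proof -
  have "\<omega> s s' + \<omega> s' t \<le> \<omega> s t" using superaddD(1)[OF assms(1)] assms by simp
  moreover have "\<omega> s' t' + \<omega> t' t \<le> \<omega> s' t" using superaddD(1)[OF assms(1)] assms by simp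
  moreover have "0 \<le> \<omega> s s'" "0 \<le> \<omega> t' t" using superaddD(2)[OF assms(1)] assms by auto
  ultimately show ?thesis by linarith
qed

lemma superadd_sub: "superadd \<omega> a b \<Longrightarrow> a \<le> a' \<Longrightarrow> b' \<le> b \<Longrightarrow> superadd \<omega> a' b'"
  unfolding superadd_def by (meson order_trans)

lemma superadd_scale: "superadd \<omega> a b \<Longrightarrow> 0 \<le> c \<Longrightarrow> superadd (\<lambda>s t. c * \<omega> s t) a b"
  unfolding superadd_def by (metis distrib_left mult_left_mono mult_nonneg_nonneg)

lemma superadd_sum_partition:
  assumes "superadd \<omega> a b"
  shows "is_partition s t L \<Longrightarrow> a \<le> s \<Longrightarrow> t \<le> b \<Longrightarrow> (\<Sum>(u,v)\<leftarrow>intervals_of L. \<omega> u v) \<le> \<omega> s t"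
proof (induction L arbitrary: s)
  case Nil then show ?case by (simp add: is_partition_def)
next
  case (Cons x L)
  show ?case
  proof (cases "L = []")
    case True
    then have "s = t" "x = s" using Cons.prems by (auto simp: is_partition_def)
    then show ?thesis using True superaddD(2)[OF assms] Cons.prems by simp
  next
    case False
    have x: "x = s" using Cons.prems by (simp add: is_partition_def)
    have P: "is_partition (hd L) t L" using Cons.prems False
      by (auto simp: is_partition_def)
    have h: "s < hd L" using Cons.prems False x by (auto simp: is_partition_def)
    have "hd L \<le> t" using is_partition_le[OF P] .
    have "(\<Sum>(u,v)\<leftarrow>intervals_of L. \<omega> u v) \<le> \<omega> (hd L) t"
      using Cons.IH[OF P] Cons.prems h by simp
    moreover have "\<omega> s (hd L) + \<omega> (hd L) t \<le> \<omega> s t"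
      using superaddD(1)[OF assms] Cons.prems h \<open>hd L \<le> t\<close> by simp
    ultimately show ?thesis using False x by (simp add: intervals_of_Cons)
  qed
qed

section \<open>Riemann-Stieltjes sums\<close>

definition rsum :: "(real \<Rightarrow> real) \<Rightarrow> (real \<Rightarrow> real) \<Rightarrow> real list \<Rightarrow> real" where
  "rsum X g ts = (\<Sum>(s,t)\<leftarrow>intervals_of ts. X s * (g t - g s))"

lemma rsum_append:
  "xs \<noteq> [] \<Longrightarrow> ys \<noteq> [] \<Longrightarrow> last xs = hd ys \<Longrightarrow> rsum X g (xs @ tl ys) = rsum X g xs + rsum X g ys"
  by (simp add: rsum_def intervals_of_append)

lemma rsum_remove:
  "rsum X g (xs @ [u, v, w] @ ys) - rsum X g (xs @ [u, w] @ ys) = (X v - X u) * (g w - g v)"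
  unfolding rsum_def intervals_of_remove by (simp add: algebra_simps)

lemma rsum_single[simp]: "rsum X g [x] = 0" by (simp add: rsum_def)
lemma rsum_two[simp]: "rsum X g [x, y] = X x * (g y - g x)" by (simp add: rsum_def)

(* ---- part P3 ---- *)
lemma pigeon:
  assumes om: "superadd \<omega> a b"
  shows "sorted_wrt (<) L \<Longrightarrow> set L \<subseteq> {a..b} \<Longrightarrow> 3 \<le> length L \<Longrightarrow>
    \<exists>xs u v w ys. L = xs @ [u,v,w] @ ys \<and> (real (length L) - 2) * \<omega> u w \<le> 2 * \<omega> (hd L) (last L)"
proof (induction "length L" arbitrary: L rule: less_induct)
  case less
  obtain t0 t1 t2 L' where L: "L = t0 # t1 # t2 # L'" using less.prems(3)
    by (metis Suc_le_length_iff numeral_3_eq_3)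
  have in_ab: "\<And>x. x \<in> set L \<Longrightarrow> a \<le> x \<and> x \<le> b" using less.prems(2) by auto
  have lastL: "last L \<in> set L" using L by simp
  have t02: "t0 < t2" "t2 \<le> last L" "t0 \<le> t2"
    using less.prems(1) L sorted_last_ge[OF less.prems(1), of t2] by auto
  have ab: "a \<le> t0" "last L \<le> b" "a \<le> t2" using in_ab L lastL by auto
  have nn: "0 \<le> \<omega> t0 t2" using superaddD(2)[OF om] ab t02 by auto
  show ?case
  proof (cases "length L \<le> 4")
    case True
    have "(real (length L) - 2) * \<omega> t0 t2 \<le> 2 * \<omega> t0 (last L)"
    proof -
      have "\<omega> t0 t2 \<le> \<omega> t0 (last L)" using superadd_mono[OF om, of t0 t0 t2 "last L"] ab t02 by simp
      moreover have "real (length L) - 2 \<le> 2" using True by simp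
      moreover have "(real (length L) - 2) * \<omega> t0 t2 \<le> 2 * \<omega> t0 t2"
        using \<open>real (length L) - 2 \<le> 2\<close> nn by (rule mult_right_mono)
      ultimately show ?thesis by linarith
    qed
    then show ?thesis using L by (intro exI[of _ "[]"]) auto
  next
    case False
    show ?thesis
    proof (cases "(real (length L) - 2) * \<omega> t0 t2 \<le> 2 * \<omega> t0 (last L)")
      case True
      then show ?thesis using L by (intro exI[of _ "[]"]) auto
    next
      case big: False
      define L2 where "L2 = t2 # L'"
      have len: "length L2 = length L - 2" "3 \<le> length L2" using L False by (auto simp: L2_def)
      have so: "sorted_wrt (<) L2" "set L2 \<subseteq> {a..b}" using less.prems L by (auto simp: L2_def)
      have "\<exists>xs u v w ys. L2 = xs @ [u,v,w] @ ys \<and> (real (length L2) - 2) * \<omega> u w \<le> 2 * \<omega> (hd L2) (last L2)"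
        by (rule less.hyps) (use len so L in auto)
      then obtain xs u v w ys where dec: "L2 = xs @ [u,v,w] @ ys"
        and ineq: "(real (length L2) - 2) * \<omega> u w \<le> 2 * \<omega> (hd L2) (last L2)"
        by blast
      have lastL2: "last L2 = last L" using L by (simp add: L2_def)
      have uw: "u \<in> set L" "w \<in> set L" "u \<le> w"
      proof -
        show "u \<in> set L" "w \<in> set L" using dec L by (auto simp: L2_def)
        have "sorted_wrt (<) L2" by fact
        then show "u \<le> w" using dec by (auto simp: sorted_wrt_append)
      qed
      have nuw: "0 \<le> \<omega> u w" using superaddD(2)[OF om] in_ab uw by auto
      have sup: "\<omega> t0 t2 + \<omega> t2 (last L) \<le> \<omega> t0 (last L)"
        using superaddD(1)[OF om] ab t02 by auto
      define n where "n = real (length L)"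
      have n5: "n \<ge> 5" using False by (simp add: n_def)
      have hdL2: "hd L2 = t2" by (simp add: L2_def)
      have nL: "real (length L2) = n - 2" using L by (simp add: L2_def n_def)
      have e: "real (length L2) - 2 = n - 4" using nL by simp
      have i1: "(n - 4) * \<omega> u w \<le> 2 * \<omega> t2 (last L)"
        using ineq unfolding e hdL2 lastL2 .
      have i2: "(n - 2) * \<omega> t0 t2 > 2 * \<omega> t0 (last L)" using big by (simp add: n_def)
      have "(n - 2) * \<omega> u w \<le> 2 * \<omega> t0 (last L)"
      proof (rule ccontr)
        assume c: "\<not> ?thesis"
        have "(n - 4) * ((n - 2) * \<omega> u w) \<le> (n - 2) * (2 * \<omega> t2 (last L))"
          using mult_left_mono[OF i1, of "n - 2"] n5 by (simp add: algebra_simps)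
        moreover have "(n - 4) * (2 * \<omega> t0 (last L)) < (n - 4) * ((n - 2) * \<omega> u w)"
          using c n5 by (intro mult_strict_left_mono) auto
        ultimately have "(n - 4) * (2 * \<omega> t0 (last L)) < (n - 2) * (2 * \<omega> t2 (last L))" by linarith
        moreover have "(n - 2) * \<omega> t2 (last L) \<le> (n - 2) * (\<omega> t0 (last L) - \<omega> t0 t2)"
          using sup n5 by (intro mult_left_mono) auto
        ultimately show False using i2 by (simp add: algebra_simps)
      qed
      moreover have Ld: "L = (t0 # t1 # xs) @ [u,v,w] @ ys" using dec L by (simp add: L2_def)
      moreover have "hd L = t0" using L by simp
      ultimately show ?thesis unfolding n_def by metis
    qed
  qed
qed

definition Kc :: "real \<Rightarrow> real" where
  "Kc \<theta> = (\<Sum>j. (2 / real (Suc j)) powr \<theta>)"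

lemma Kc_summable: "1 < \<theta> \<Longrightarrow> summable (\<lambda>j. (2 / real (Suc j)) powr \<theta>)"
proof -
  assume th: "1 < \<theta>"
  have "summable (\<lambda>n. real n powr (-\<theta>))" using th by (subst summable_real_powr_iff) auto
  then have "summable (\<lambda>n. real (Suc n) powr (-\<theta>))" by (subst summable_Suc_iff)
  then have "summable (\<lambda>n. 2 powr \<theta> * real (Suc n) powr (-\<theta>))" by (rule summable_mult)
  moreover have "(2 / real (Suc n)) powr \<theta> = 2 powr \<theta> * real (Suc n) powr (-\<theta>)" for n
    by (subst powr_divide) (auto simp: powr_minus divide_inverse)
  ultimately show ?thesis by simp
qed

lemma Kc_bound: "1 < \<theta> \<Longrightarrow> (\<Sum>j\<in>{1..<m}. (2 / real j) powr \<theta>) \<le> Kc \<theta>"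
proof -
  assume th: "1 < \<theta>"
  have "(\<Sum>j\<in>{1..<m}. (2 / real j) powr \<theta>) = (\<Sum>j<m - 1. (2 / real (Suc j)) powr \<theta>)"
  proof (cases m)
    case 0 then show ?thesis by simp
  next
    case (Suc k)
    then show ?thesis
      using sum.shift_bounds_Suc_ivl[of "\<lambda>j. (2 / real j) powr \<theta>" 0 k]
      by (simp add: atLeast0LessThan)
  qed
  also have "\<dots> \<le> Kc \<theta>" unfolding Kc_def
    by (rule sum_le_suminf[OF Kc_summable[OF th]]) auto
  finally show ?thesis .
qed

lemma Kc_nonneg: "1 < \<theta> \<Longrightarrow> 0 \<le> Kc \<theta>"
  using Kc_bound[of \<theta> 0] by simp

lemma young_loeve_aux:
  assumes om: "superadd \<omega> a b" and C: "0 \<le> C" and th: "0 \<le> \<theta>"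
  and H: "\<And>u v w. a \<le> u \<Longrightarrow> u \<le> v \<Longrightarrow> v \<le> w \<Longrightarrow> w \<le> b \<Longrightarrow>
            \<bar>(X v - X u) * (g w - g v)\<bar> \<le> C * \<omega> u w powr \<theta>"
  shows "is_partition a b L \<Longrightarrow>
    \<bar>rsum X g L - X a * (g b - g a)\<bar> \<le> C * \<omega> a b powr \<theta> * (\<Sum>j\<in>{1..<length L - 1}. (2 / real j) powr \<theta>)"
proof (induction "length L" arbitrary: L rule: less_induct)
  case less
  have P: "sorted_wrt (<) L" "L \<noteq> []" "hd L = a" "last L = b" using less.prems by (auto simp: is_partition_def)
  have ab: "a \<le> b" using is_partition_le[OF less.prems] .
  have nnR: "0 \<le> C * \<omega> a b powr \<theta> * (\<Sum>j\<in>{1..<m}. (2 / real j) powr \<theta>)" for m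
    using C by (intro mult_nonneg_nonneg sum_nonneg) auto
  show ?case
  proof (cases "length L \<le> 2")
    case True
    then consider "L = [a]" | "L = [a, b]" using P
      by (cases L; cases "tl L"; auto)
    then show ?thesis
    proof cases
      case 1 then have "b = a" using P by simp
      then show ?thesis using 1 nnR by simp
    next
      case 2 then show ?thesis using nnR by simp
    qed
  next
    case False
    have inab: "set L \<subseteq> {a..b}" using is_partition_set[OF less.prems] by auto
    obtain xs u v w ys where dec: "L = xs @ [u,v,w] @ ys"
      and ineq: "(real (length L) - 2) * \<omega> u w \<le> 2 * \<omega> (hd L) (last L)"
      using pigeon[OF om P(1) inab] False by auto
    define L' where "L' = xs @ [u,w] @ ys"
    have so: "sorted_wrt (<) L'" using P(1) unfolding dec L'_def
      by (auto simp: sorted_wrt_append)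
    have hd': "hd L' = a" using P(3) unfolding dec L'_def by (cases xs) auto
    have last': "last L' = b" using P(4) unfolding dec L'_def by (cases ys rule: rev_cases) auto
    have part': "is_partition a b L'" using so hd' last' by (auto simp: is_partition_def L'_def)
    have lenL': "length L' = length L - 1" by (simp add: dec L'_def)
    have IH: "\<bar>rsum X g L' - X a * (g b - g a)\<bar> \<le>
        C * \<omega> a b powr \<theta> * (\<Sum>j\<in>{1..<length L' - 1}. (2 / real j) powr \<theta>)"
      using less.hyps[OF _ part'] lenL' False by simp
    have uvw: "a \<le> u" "u \<le> v" "v \<le> w" "w \<le> b"
    proof -
      have "u \<in> set L" "w \<in> set L" by (auto simp: dec)
      then show "a \<le> u" "w \<le> b" using inab by auto
      show "u \<le> v" "v \<le> w" using P(1) unfolding dec by (auto simp: sorted_wrt_append)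
    qed
    have rem: "\<bar>rsum X g L - rsum X g L'\<bar> \<le> C * \<omega> u w powr \<theta>"
      using rsum_remove[of X g xs u v w ys] H[OF uvw] unfolding dec L'_def by simp
    define n where "n = real (length L)"
    have n3: "3 \<le> n" using False by (simp add: n_def)
    have nuw: "0 \<le> \<omega> u w" using superaddD(2)[OF om] uvw by auto
    have nab: "0 \<le> \<omega> a b" using superaddD(2)[OF om] ab by auto
    have "\<omega> u w \<le> (2 / (n - 2)) * \<omega> a b"
      using ineq P n3 by (simp add: n_def field_simps)
    then have "\<omega> u w powr \<theta> \<le> ((2 / (n - 2)) * \<omega> a b) powr \<theta>"
      using th nuw by (intro powr_mono2) auto
    also have "\<dots> = (2 / (n - 2)) powr \<theta> * \<omega> a b powr \<theta>"
      by (rule powr_mult)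
    finally have rem2: "\<bar>rsum X g L - rsum X g L'\<bar> \<le> C * \<omega> a b powr \<theta> * (2 / (n - 2)) powr \<theta>"
      using rem C by (smt (verit) mult.commute mult.left_commute mult_left_mono)
    have sumeq: "(\<Sum>j\<in>{1..<length L - 1}. (2 / real j) powr \<theta>) =
       (\<Sum>j\<in>{1..<length L' - 1}. (2 / real j) powr \<theta>) + (2 / (n - 2)) powr \<theta>"
    proof -
      define k where "k = length L' - 1"
      have k1: "length L - 1 = Suc k" using lenL' False by (simp add: k_def)
      have k2: "1 \<le> k" using lenL' False by (simp add: k_def)
      have k3: "real k = n - 2" using lenL' False by (simp add: n_def k_def of_nat_diff)
      show ?thesis unfolding k1 k_def[symmetric] sum.atLeastLessThan_Suc[OF k2] k3 ..
    qed
    show ?thesis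
      using IH rem2 unfolding sumeq by (simp add: algebra_simps)
  qed
qed

lemma young_loeve:
  assumes om: "superadd \<omega> a b" and C: "0 \<le> C" and th: "1 < \<theta>"
  and H: "\<And>u v w. a \<le> u \<Longrightarrow> u \<le> v \<Longrightarrow> v \<le> w \<Longrightarrow> w \<le> b \<Longrightarrow>
            \<bar>(X v - X u) * (g w - g v)\<bar> \<le> C * \<omega> u w powr \<theta>"
  and L: "is_partition a b L"
  shows "\<bar>rsum X g L - X a * (g b - g a)\<bar> \<le> C * Kc \<theta> * \<omega> a b powr \<theta>"
proof -
  have "\<bar>rsum X g L - X a * (g b - g a)\<bar> \<le> C * \<omega> a b powr \<theta> * (\<Sum>j\<in>{1..<length L - 1}. (2 / real j) powr \<theta>)"
    using young_loeve_aux[OF om C _ H L] th by simp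
  also have "\<dots> \<le> C * \<omega> a b powr \<theta> * Kc \<theta>"
    using Kc_bound[OF th] C by (intro mult_left_mono) auto
  finally show ?thesis by (simp add: algebra_simps)
qed

(* ---- part P4 ---- *)
lemma split_sorted:
  fixes Q :: "real list"
  shows "sorted_wrt (<) Q \<Longrightarrow> c \<in> set Q \<Longrightarrow>
    Q = filter (\<lambda>x. x \<le> c) Q @ tl (filter (\<lambda>x. c \<le> x) Q) \<and>
    filter (\<lambda>x. x \<le> c) Q \<noteq> [] \<and> filter (\<lambda>x. c \<le> x) Q \<noteq> [] \<and>
    last (filter (\<lambda>x. x \<le> c) Q) = c \<and> hd (filter (\<lambda>x. c \<le> x) Q) = c"
proof (induction Q)
  case Nil then show ?case by simp
next
  case (Cons x Q)
  show ?case
  proof (cases "x = c")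
    case True
    then have "filter (\<lambda>x. x \<le> c) Q = []" "filter (\<lambda>x. c \<le> x) Q = Q"
      using Cons.prems(1) by (auto simp: filter_empty_conv intro!: filter_True)
    then show ?thesis using True by simp
  next
    case False
    then have xc: "x < c" using Cons.prems by auto
    have "c \<in> set Q" using Cons.prems False by auto
    then have IH: "Q = filter (\<lambda>x. x \<le> c) Q @ tl (filter (\<lambda>x. c \<le> x) Q)"
      "filter (\<lambda>x. x \<le> c) Q \<noteq> []" "filter (\<lambda>x. c \<le> x) Q \<noteq> []"
      "last (filter (\<lambda>x. x \<le> c) Q) = c" "hd (filter (\<lambda>x. c \<le> x) Q) = c"
      using Cons.IH Cons.prems by auto
    then show ?thesis using xc by simp
  qed
qed

lemma refine:
  assumes "is_partition a b P" "is_partition a b Q" "set P \<subseteq> set Q"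
    and E: "\<And>s t L. (s,t) \<in> set (intervals_of P) \<Longrightarrow> is_partition s t L \<Longrightarrow>
              \<bar>rsum X g L - X s * (g t - g s)\<bar> \<le> E s t"
  shows "\<bar>rsum X g Q - rsum X g P\<bar> \<le> (\<Sum>(s,t)\<leftarrow>intervals_of P. E s t)"
  using assms
proof (induction P arbitrary: a Q)
  case Nil then show ?case by (simp add: is_partition_def)
next
  case (Cons x P)
  have xa: "x = a" using Cons.prems(1) by (simp add: is_partition_def)
  show ?case
  proof (cases "P = []")
    case True
    then have "a = b" using Cons.prems(1) xa by (simp add: is_partition_def)
    then have "Q = [a]" using Cons.prems(2) is_partition_single by simp
    then show ?thesis using True xa by simp
  next
    case False
    define y where "y = hd P"
    have PP: "is_partition y b P" using Cons.prems(1) False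
      by (auto simp: is_partition_def y_def)
    have ay: "a < y" using Cons.prems(1) False xa by (auto simp: is_partition_def y_def)
    have yQ: "y \<in> set Q" using Cons.prems(3) False by (auto simp: y_def)
    have sQ: "sorted_wrt (<) Q" using Cons.prems(2) by (simp add: is_partition_def)
    define Q1 where "Q1 = filter (\<lambda>x. x \<le> y) Q"
    define Q2 where "Q2 = filter (\<lambda>x. y \<le> x) Q"
    have sp: "Q = Q1 @ tl Q2" "Q1 \<noteq> []" "Q2 \<noteq> []" "last Q1 = y" "hd Q2 = y"
      using split_sorted[OF sQ yQ] by (auto simp: Q1_def Q2_def)
    have hdQ: "hd Q = a" "last Q = b" "Q \<noteq> []" using Cons.prems(2) by (auto simp: is_partition_def)
    have yb: "y \<le> b" using is_partition_le[OF PP] .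
    have hdQ1: "hd Q1 = a"
    proof -
      obtain q Q' where "Q = q # Q'" using hdQ by (cases Q) auto
      then show ?thesis using hdQ ay by (simp add: Q1_def)
    qed
    have lastQ2: "last Q2 = b"
    proof -
      have "Q = butlast Q @ [b]" using hdQ by (metis append_butlast_last_id)
      then have "Q2 = filter (\<lambda>x. y \<le> x) (butlast Q) @ [b]" using yb unfolding Q2_def
        by (metis (mono_tags, lifting) filter.simps filter_append)
      then show ?thesis by simp
    qed
    have Q1P: "is_partition a y Q1" using sp hdQ1 sQ
      by (auto simp: is_partition_def Q1_def intro: sorted_wrt_filter)
    have Q2P: "is_partition y b Q2" using sp lastQ2 sQ
      by (auto simp: is_partition_def Q2_def intro: sorted_wrt_filter)
    have sub: "set P \<subseteq> set Q2"
    proof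
      fix z assume "z \<in> set P"
      then have "y \<le> z" "z \<in> set Q" using Cons.prems(3) is_partition_set[OF PP] by auto
      then show "z \<in> set Q2" by (simp add: Q2_def)
    qed
    have IH: "\<bar>rsum X g Q2 - rsum X g P\<bar> \<le> (\<Sum>(s,t)\<leftarrow>intervals_of P. E s t)"
      using Cons.IH[OF PP Q2P sub] Cons.prems(4) False by (simp add: intervals_of_Cons y_def)
    have int1: "(a, y) \<in> set (intervals_of (x # P))" using False xa by (simp add: intervals_of_Cons y_def)
    have E1: "\<bar>rsum X g Q1 - X a * (g y - g a)\<bar> \<le> E a y" using Cons.prems(4)[OF int1 Q1P] .
    have "rsum X g Q = rsum X g Q1 + rsum X g Q2" using sp by (metis rsum_append)
    moreover have "rsum X g (x # P) = X a * (g y - g a) + rsum X g P"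
      using False xa by (simp add: rsum_def intervals_of_Cons y_def)
    moreover have "(\<Sum>(s,t)\<leftarrow>intervals_of (x # P). E s t) = E a y + (\<Sum>(s,t)\<leftarrow>intervals_of P. E s t)"
      using False xa by (simp add: intervals_of_Cons y_def)
    ultimately show ?thesis using IH E1 by linarith
  qed
qed

definition merge :: "real list \<Rightarrow> real list \<Rightarrow> real list" where
  "merge P Q = sorted_list_of_set (set P \<union> set Q)"

lemma merge_partition:
  assumes "is_partition a b P" "is_partition a b Q"
  shows "is_partition a b (merge P Q)" "set P \<subseteq> set (merge P Q)" "set Q \<subseteq> set (merge P Q)"
proof -
  have set: "set (merge P Q) = set P \<union> set Q" by (simp add: merge_def)
  have so: "sorted_wrt (<) (merge P Q)" unfolding merge_def
    using strict_sorted_list_of_set by simp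
  have ain: "a \<in> set P" "b \<in> set P" using assms(1) hd_in_set[of P] last_in_set[of P]
    unfolding is_partition_def by auto
  have rng: "\<And>x. x \<in> set (merge P Q) \<Longrightarrow> a \<le> x \<and> x \<le> b"
    using is_partition_set assms unfolding set by blast
  have ne: "merge P Q \<noteq> []" using set ain by auto
  have "hd (merge P Q) = a"
  proof -
    have "hd (merge P Q) \<le> a" using sorted_hd_le[OF so, of a] ain set by auto
    moreover have "a \<le> hd (merge P Q)" using rng ne hd_in_set by blast
    ultimately show ?thesis by simp
  qed
  moreover have "last (merge P Q) = b"
  proof -
    have "b \<le> last (merge P Q)" using sorted_last_ge[OF so, of b] ain set by auto
    moreover have "last (merge P Q) \<le> b" using rng ne last_in_set by blast
    ultimately show ?thesis by simp
  qed
  ultimately show "is_partition a b (merge P Q)" using so ne by (simp add: is_partition_def)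
  show "set P \<subseteq> set (merge P Q)" "set Q \<subseteq> set (merge P Q)" using set by auto
qed

section \<open>Uniform partitions\<close>

definition upart :: "real \<Rightarrow> real \<Rightarrow> nat \<Rightarrow> real list" where
  "upart a b N = (if a < b then map (\<lambda>k. a + (b - a) * real k / real N) [0..<Suc N] else [a])"

lemma intervals_of_map_upt:
  "intervals_of (map f [0..<Suc N]) = map (\<lambda>k. (f k, f (Suc k))) [0..<N]"
proof (induction N)
  case 0 then show ?case by simp
next
  case (Suc N)
  have "map f [0..<Suc (Suc N)] = map f [0..<Suc N] @ tl [f N, f (Suc N)]" by simp
  then have "intervals_of (map f [0..<Suc (Suc N)]) = intervals_of (map f [0..<Suc N]) @ intervals_of [f N, f (Suc N)]"
    using intervals_of_append[of "map f [0..<Suc N]" "[f N, f (Suc N)]"] by (simp add: last_map)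
  then show ?case using Suc by simp
qed

lemma upart:
  assumes "a \<le> b" "1 \<le> N"
  shows "is_partition a b (upart a b N)" "mesh (upart a b N) \<le> (b - a) / real N"
proof -
  show "is_partition a b (upart a b N)"
  proof (cases "a < b")
    case True
    have "sorted_wrt (<) (map (\<lambda>k. a + (b - a) * real k / real N) [0..<Suc N])"
      unfolding sorted_wrt_map using True assms
      by (intro sorted_wrt_mono_rel[OF _ sorted_wrt_upt]) (auto simp: divide_strict_right_mono)
    moreover have "last (map (\<lambda>k. a + (b - a) * real k / real N) [0..<Suc N]) = b"
      using assms by (simp add: last_map)
    moreover have "[0..<Suc N] = 0 # [1..<Suc N]" by (simp add: upt_conv_Cons)
    ultimately show ?thesis using True by (simp add: upart_def is_partition_def del: upt_Suc)
  next
    case False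
    then show ?thesis using assms by (simp add: upart_def is_partition_def)
  qed
  show "mesh (upart a b N) \<le> (b - a) / real N"
  proof (cases "a < b")
    case True
    define f where "f k = a + (b - a) * real k / real N" for k
    have "intervals_of (upart a b N) = map (\<lambda>k. (f k, f (Suc k))) [0..<N]"
      using True unfolding upart_def f_def[abs_def] by (simp add: intervals_of_map_upt del: upt_Suc)
    moreover have "f (Suc k) - f k \<le> (b - a) / real N" for k
      using assms by (simp add: f_def field_simps)
    ultimately show ?thesis using assms by (intro mesh_le) auto
  next
    case False
    then show ?thesis using assms by (simp add: upart_def mesh_def)
  qed
qed

lemma small_mesh_partition:
  assumes "a \<le> b" "0 < d"
  obtains N where "\<And>n. n \<ge> N \<Longrightarrow> is_partition a b (upart a b (Suc n)) \<and> mesh (upart a b (Suc n)) < d"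
proof -
  obtain N where N: "inverse (real (Suc N)) < d / (b - a + 1)"
    using reals_Archimedean[of "d / (b - a + 1)"] assms by auto
  have "is_partition a b (upart a b (Suc n)) \<and> mesh (upart a b (Suc n)) < d" if "n \<ge> N" for n
  proof -
    have "mesh (upart a b (Suc n)) \<le> (b - a) / real (Suc n)" using upart[OF assms(1), of "Suc n"] by simp
    also have "\<dots> \<le> (b - a + 1) / real (Suc n)" by (intro divide_right_mono) auto
    also have "\<dots> \<le> (b - a + 1) * inverse (real (Suc N))"
      unfolding divide_inverse by (intro mult_left_mono le_imp_inverse_le) (use that assms in auto)
    also have "\<dots> < (b - a + 1) * (d / (b - a + 1))"
      by (rule mult_strict_left_mono) (use N assms in auto)
    also have "\<dots> = d" using assms by simp
    finally show ?thesis using upart[OF assms(1), of "Suc n"] by simp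
  qed
  then show ?thesis using that by blast
qed

lemma has_young_integral_unique:
  assumes "a \<le> b" "has_young_integral bil f g a b I" "has_young_integral bil f g a b J"
  shows "I = J"
proof (rule ccontr)
  assume "I \<noteq> J"
  then have e: "dist I J / 2 > 0" by simp
  obtain d1 where d1: "d1 > 0" "\<And>ts. is_partition a b ts \<and> mesh ts < d1 \<Longrightarrow>
     dist (\<Sum>(s,t)\<leftarrow>intervals_of ts. bil (f s) (g t - g s)) I < dist I J / 2"
    using assms(2) e unfolding has_young_integral_def by blast
  obtain d2 where d2: "d2 > 0" "\<And>ts. is_partition a b ts \<and> mesh ts < d2 \<Longrightarrow>
     dist (\<Sum>(s,t)\<leftarrow>intervals_of ts. bil (f s) (g t - g s)) J < dist I J / 2"
    using assms(3) e unfolding has_young_integral_def by blast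
  obtain N where N: "\<And>n. n \<ge> N \<Longrightarrow> is_partition a b (upart a b (Suc n)) \<and> mesh (upart a b (Suc n)) < min d1 d2"
    using small_mesh_partition[OF assms(1), of "min d1 d2"] d1 d2 by auto
  define ts where "ts = upart a b (Suc N)"
  have "dist (\<Sum>(s,t)\<leftarrow>intervals_of ts. bil (f s) (g t - g s)) I < dist I J / 2"
       "dist (\<Sum>(s,t)\<leftarrow>intervals_of ts. bil (f s) (g t - g s)) J < dist I J / 2"
    using N[of N] d1 d2 by (auto simp: ts_def)
  moreover have "dist I J \<le> dist (\<Sum>(s,t)\<leftarrow>intervals_of ts. bil (f s) (g t - g s)) I
      + dist (\<Sum>(s,t)\<leftarrow>intervals_of ts. bil (f s) (g t - g s)) J"
    using dist_triangle2[of I J "\<Sum>(s,t)\<leftarrow>intervals_of ts. bil (f s) (g t - g s)"] by (simp add: dist_commute)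
  ultimately show False by linarith
qed

lemma young_integral_eq:
  "a \<le> b \<Longrightarrow> has_young_integral bil f g a b I \<Longrightarrow> young_integral bil f g a b = I"
  unfolding young_integral_def using has_young_integral_unique by blast

lemma has_young_integral_rsum:
  "has_young_integral (*) X g a b I \<longleftrightarrow>
     (\<forall>e>0. \<exists>\<delta>>0. \<forall>ts. is_partition a b ts \<and> mesh ts < \<delta> \<longrightarrow> \<bar>rsum X g ts - I\<bar> < e)"
  unfolding has_young_integral_def rsum_def dist_real_def ..

lemma young_exists_cauchy:
  assumes ab: "a \<le> b"
    and Cau: "\<And>e. e > 0 \<Longrightarrow> \<exists>\<delta>>0. \<forall>P Q. is_partition a b P \<and> mesh P < \<delta> \<and>
                  is_partition a b Q \<and> mesh Q < \<delta> \<longrightarrow> \<bar>rsum X g P - rsum X g Q\<bar> < e"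
  shows "\<exists>I. has_young_integral (*) X g a b I"
proof -
  define r where "r n = rsum X g (upart a b (Suc n))" for n
  have "Cauchy r"
  proof (rule metric_CauchyI)
    fix e :: real assume "0 < e"
    then obtain d where d: "d > 0" "\<forall>P Q. is_partition a b P \<and> mesh P < d \<and>
                  is_partition a b Q \<and> mesh Q < d \<longrightarrow> \<bar>rsum X g P - rsum X g Q\<bar> < e"
      using Cau by blast
    obtain N where N: "\<And>n. n \<ge> N \<Longrightarrow> is_partition a b (upart a b (Suc n)) \<and> mesh (upart a b (Suc n)) < d"
      using small_mesh_partition[OF ab d(1)] by blast
    show "\<exists>M. \<forall>m\<ge>M. \<forall>n\<ge>M. dist (r m) (r n) < e"
    proof (intro exI[of _ N] allI impI)
      fix m n assume "N \<le> m" "N \<le> n"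
      then show "dist (r m) (r n) < e" using N[of m] N[of n] d(2) by (auto simp: r_def dist_real_def)
    qed
  qed
  then obtain I where I: "r \<longlonglongrightarrow> I" using Cauchy_convergent_iff convergent_def by blast
  have "has_young_integral (*) X g a b I"
    unfolding has_young_integral_rsum
  proof (intro allI impI)
    fix e :: real assume e: "e > 0"
    then obtain d where d: "d > 0" "\<forall>P Q. is_partition a b P \<and> mesh P < d \<and>
                  is_partition a b Q \<and> mesh Q < d \<longrightarrow> \<bar>rsum X g P - rsum X g Q\<bar> < e / 2"
      using Cau[of "e/2"] by auto
    obtain N where N: "\<And>n. n \<ge> N \<Longrightarrow> is_partition a b (upart a b (Suc n)) \<and> mesh (upart a b (Suc n)) < d"
      using small_mesh_partition[OF ab d(1)] by blast
    obtain M where M: "\<And>n. n \<ge> M \<Longrightarrow> \<bar>r n - I\<bar> < e / 2"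
      using I e unfolding LIMSEQ_def dist_real_def by (metis half_gt_zero)
    define n where "n = max N M"
    have "\<bar>rsum X g ts - I\<bar> < e" if "is_partition a b ts \<and> mesh ts < d" for ts
    proof -
      have "\<bar>rsum X g ts - r n\<bar> < e / 2" using d(2) N[of n] that by (auto simp: r_def n_def)
      moreover have "\<bar>r n - I\<bar> < e / 2" using M[of n] by (simp add: n_def)
      ultimately show ?thesis by linarith
    qed
    then show "\<exists>\<delta>>0. \<forall>ts. is_partition a b ts \<and> mesh ts < \<delta> \<longrightarrow> \<bar>rsum X g ts - I\<bar> < e"
      using d(1) by blast
  qed
  then show ?thesis by blast
qed

(* ---- part P5 ---- *)
section \<open>p-variation control\<close>

definition psum :: "real \<Rightarrow> (real \<Rightarrow> 'a::real_normed_vector) \<Rightarrow> real list \<Rightarrow> real" where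
  "psum p \<gamma> ts = (\<Sum>(s,t)\<leftarrow>intervals_of ts. norm (\<gamma> t - \<gamma> s) powr p)"

definition pv :: "real \<Rightarrow> (real \<Rightarrow> 'a::real_normed_vector) \<Rightarrow> real \<Rightarrow> real \<Rightarrow> real" where
  "pv p \<gamma> s t = (SUP ts\<in>{ts. is_partition s t ts}. psum p \<gamma> ts)"

lemma psum_append:
  "xs \<noteq> [] \<Longrightarrow> ys \<noteq> [] \<Longrightarrow> last xs = hd ys \<Longrightarrow> psum p \<gamma> (xs @ tl ys) = psum p \<gamma> xs + psum p \<gamma> ys"
  by (simp add: psum_def intervals_of_append)

lemma psum_nonneg: "0 \<le> psum p \<gamma> ts"
  unfolding psum_def by (induction ts rule: induct_list012) auto

lemma psum_seg: "psum p \<gamma> (seg s t) = (if s < t then norm (\<gamma> t - \<gamma> s) powr p else 0)"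
  by (simp add: psum_def seg_def)

lemma part_ne: "is_partition a b ts \<Longrightarrow> ts \<noteq> [] \<and> hd ts = a \<and> last ts = b"
  by (simp add: is_partition_def)

lemma pv_bdd:
  assumes bv: "bounded_p_variation p \<gamma> 0 T" and st: "0 \<le> s" "s \<le> t" "t \<le> T"
  shows "bdd_above (psum p \<gamma> ` {ts. is_partition s t ts})"
proof -
  obtain C where C: "\<And>ts. is_partition 0 T ts \<Longrightarrow> psum p \<gamma> ts \<le> C"
    using bv unfolding bounded_p_variation_def psum_def by blast
  have "psum p \<gamma> ts \<le> C" if ts: "is_partition s t ts" for ts
  proof -
    have P1: "is_partition 0 s (seg 0 s)" "is_partition t T (seg t T)" using st by (auto intro: is_partition_seg)
    have P2: "is_partition s T (ts @ tl (seg t T))" using is_partition_append[OF ts P1(2)] .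
    have P3: "is_partition 0 T (seg 0 s @ tl (ts @ tl (seg t T)))" using is_partition_append[OF P1(1) P2] .
    have "psum p \<gamma> (ts @ tl (seg t T)) = psum p \<gamma> ts + psum p \<gamma> (seg t T)"
      using part_ne[OF ts] part_ne[OF P1(2)] by (intro psum_append) auto
    moreover have "psum p \<gamma> (seg 0 s @ tl (ts @ tl (seg t T))) = psum p \<gamma> (seg 0 s) + psum p \<gamma> (ts @ tl (seg t T))"
      using part_ne[OF P2] part_ne[OF P1(1)] by (intro psum_append) auto
    ultimately have "psum p \<gamma> ts \<le> psum p \<gamma> (seg 0 s @ tl (ts @ tl (seg t T)))"
      using psum_nonneg[of p \<gamma> "seg 0 s"] psum_nonneg[of p \<gamma> "seg t T"] by linarith
    then show ?thesis using C[OF P3] by linarith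
  qed
  then show ?thesis unfolding bdd_above_def by blast
qed

lemma pv_upper:
  assumes "bounded_p_variation p \<gamma> 0 T" "0 \<le> s" "s \<le> t" "t \<le> T" "is_partition s t ts"
  shows "psum p \<gamma> ts \<le> pv p \<gamma> s t"
  unfolding pv_def using pv_bdd[OF assms(1-4)] assms(5) by (intro cSUP_upper) auto

lemma pv_ge_norm:
  assumes "bounded_p_variation p \<gamma> 0 T" "0 \<le> s" "s \<le> t" "t \<le> T"
  shows "norm (\<gamma> t - \<gamma> s) powr p \<le> pv p \<gamma> s t"
proof -
  have "psum p \<gamma> (seg s t) \<le> pv p \<gamma> s t" using pv_upper[OF assms is_partition_seg] assms by simp
  then show ?thesis using assms by (cases "s < t") (auto simp: psum_seg)
qed

lemma pv_superadd:
  assumes bv: "bounded_p_variation p \<gamma> 0 T"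
  shows "superadd (pv p \<gamma>) 0 T"
  unfolding superadd_def
proof (intro conjI allI impI)
  fix s t assume st: "0 \<le> s \<and> s \<le> t \<and> t \<le> T"
  show "0 \<le> pv p \<gamma> s t" using pv_ge_norm[OF bv, of s t] st by (meson order_trans powr_ge_zero)
next
  fix s u t assume sut: "0 \<le> s \<and> s \<le> u \<and> u \<le> t \<and> t \<le> T"
  have ne: "{ts. is_partition a b ts} \<noteq> {}" if "a \<le> b" for a b
    using is_partition_seg[OF that] by blast
  have "psum p \<gamma> P1 + pv p \<gamma> u t \<le> pv p \<gamma> s t" if P1: "is_partition s u P1" for P1
  proof -
    have "pv p \<gamma> u t \<le> pv p \<gamma> s t - psum p \<gamma> P1"
      unfolding pv_def[of p \<gamma> u t]
    proof (rule cSUP_least)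
      show "{ts. is_partition u t ts} \<noteq> {}" using ne sut by auto
      fix P2 assume "P2 \<in> {ts. is_partition u t ts}"
      then have P2: "is_partition u t P2" by simp
      have "psum p \<gamma> (P1 @ tl P2) = psum p \<gamma> P1 + psum p \<gamma> P2"
        using part_ne[OF P1] part_ne[OF P2] by (intro psum_append) auto
      moreover have "psum p \<gamma> (P1 @ tl P2) \<le> pv p \<gamma> s t"
        using pv_upper[OF bv _ _ _ is_partition_append[OF P1 P2]] sut by auto
      ultimately show "psum p \<gamma> P2 \<le> pv p \<gamma> s t - psum p \<gamma> P1" by linarith
    qed
    then show ?thesis by linarith
  qed
  then have "pv p \<gamma> s u \<le> pv p \<gamma> s t - pv p \<gamma> u t"
    unfolding pv_def[of p \<gamma> s u]
    by (intro cSUP_least) (use ne sut in \<open>auto simp: pv_def[symmetric] algebra_simps\<close>)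
  then show "pv p \<gamma> s u + pv p \<gamma> u t \<le> pv p \<gamma> s t" by linarith
qed

lemma norm_le_pv:
  assumes "bounded_p_variation p \<gamma> 0 T" "0 \<le> s" "s \<le> t" "t \<le> T" "0 < p"
  shows "norm (\<gamma> t - \<gamma> s) \<le> pv p \<gamma> s t powr (1 / p)"
proof -
  have "norm (\<gamma> t - \<gamma> s) = (norm (\<gamma> t - \<gamma> s) powr p) powr (1 / p)"
    using assms(5) by (simp add: powr_powr)
  also have "\<dots> \<le> pv p \<gamma> s t powr (1 / p)"
    using pv_ge_norm[OF assms(1-4)] assms(5) by (intro powr_mono2) auto
  finally show ?thesis .
qed

lemma comp_le_pv:
  fixes \<gamma> :: "real \<Rightarrow> real^'d"
  assumes "bounded_p_variation p \<gamma> 0 T" "0 \<le> s" "s \<le> t" "t \<le> T" "0 < p"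
  shows "\<bar>\<gamma> t $ i - \<gamma> s $ i\<bar> \<le> pv p \<gamma> s t powr (1 / p)"
  using norm_le_pv[OF assms] component_le_norm_cart[of "\<gamma> t - \<gamma> s" i] by simp

section \<open>Interpolation and H-bounds\<close>

lemma interp:
  fixes x a b l :: real
  assumes "0 \<le> x" "x \<le> a" "x \<le> b" "0 \<le> l" "l \<le> 1"
  shows "x \<le> a powr (1 - l) * b powr l"
proof (cases "x = 0")
  case True then show ?thesis by simp
next
  case False
  then have "x = x powr (1 - l) * x powr l" using assms by (simp add: powr_add[symmetric])
  also have "\<dots> \<le> a powr (1 - l) * b powr l"
    using assms by (intro mult_mono powr_mono2) auto
  finally show ?thesis .
qed

lemma H_global:
  assumes om: "superadd \<omega> 0 T" and p: "0 < p"
    and gb: "\<And>s t. 0 \<le> s \<Longrightarrow> s \<le> t \<Longrightarrow> t \<le> T \<Longrightarrow> \<bar>g t - g s\<bar> \<le> \<omega> s t powr (1 / p)"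
    and Xb: "\<And>s t. 0 \<le> s \<Longrightarrow> s \<le> t \<Longrightarrow> t \<le> T \<Longrightarrow> \<bar>X t - X s\<bar> \<le> C * \<omega> s t powr (1 / p)"
    and C: "0 \<le> C"
    and uvw: "0 \<le> u" "u \<le> v" "v \<le> w" "w \<le> T"
  shows "\<bar>(X v - X u) * (g w - g v)\<bar> \<le> C * \<omega> u w powr (2 / p)"
proof -
  have m1: "\<omega> u v \<le> \<omega> u w" "\<omega> v w \<le> \<omega> u w" using superadd_mono[OF om] uvw by auto
  have n: "0 \<le> \<omega> u v" "0 \<le> \<omega> v w" using superaddD(2)[OF om] uvw by auto
  have "\<bar>(X v - X u) * (g w - g v)\<bar> = \<bar>X v - X u\<bar> * \<bar>g w - g v\<bar>" by (simp add: abs_mult)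
  also have "\<dots> \<le> (C * \<omega> u v powr (1 / p)) * \<omega> v w powr (1 / p)"
    using Xb[of u v] gb[of v w] uvw by (intro mult_mono) auto
  also have "\<dots> \<le> (C * \<omega> u w powr (1 / p)) * \<omega> u w powr (1 / p)"
    using m1 n C p by (intro mult_mono powr_mono2) auto
  also have "\<dots> = C * \<omega> u w powr (2 / p)"
    by (simp add: mult.assoc powr_add[symmetric])
  finally show ?thesis .
qed

lemma H_local:
  assumes om: "superadd \<omega> 0 T" and p: "0 < p" "p \<le> 2"
    and gb: "\<And>s t. 0 \<le> s \<Longrightarrow> s \<le> t \<Longrightarrow> t \<le> T \<Longrightarrow> \<bar>g t - g s\<bar> \<le> \<omega> s t powr (1 / p)"
    and Xb: "\<And>s t. 0 \<le> s \<Longrightarrow> s \<le> t \<Longrightarrow> t \<le> T \<Longrightarrow> \<bar>X t - X s\<bar> \<le> C * \<omega> s t powr (1 / p)"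
    and C: "0 \<le> C"
    and uvw: "0 \<le> u" "u \<le> v" "v \<le> w" "w \<le> T"
    and eps: "\<bar>X v - X u\<bar> \<le> \<epsilon>"
  shows "\<bar>(X v - X u) * (g w - g v)\<bar> \<le> (\<epsilon> powr (1 - p / 2) * C powr (p / 2)) * \<omega> u w powr (1 / 2 + 1 / p)"
proof -
  have m1: "\<omega> u v \<le> \<omega> u w" "\<omega> v w \<le> \<omega> u w" using superadd_mono[OF om] uvw by auto
  have n: "0 \<le> \<omega> u v" "0 \<le> \<omega> v w" using superaddD(2)[OF om] uvw by auto
  have "\<bar>X v - X u\<bar> \<le> \<epsilon> powr (1 - p / 2) * (C * \<omega> u v powr (1 / p)) powr (p / 2)"
    using Xb[of u v] uvw eps p by (intro interp) auto
  also have "(C * \<omega> u v powr (1 / p)) powr (p / 2) = C powr (p / 2) * \<omega> u v powr (1 / 2)"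
    using C n p by (simp add: powr_mult powr_powr)
  finally have Xe: "\<bar>X v - X u\<bar> \<le> \<epsilon> powr (1 - p / 2) * (C powr (p / 2) * \<omega> u v powr (1 / 2))" .
  have "\<bar>(X v - X u) * (g w - g v)\<bar> = \<bar>X v - X u\<bar> * \<bar>g w - g v\<bar>" by (simp add: abs_mult)
  also have "\<dots> \<le> (\<epsilon> powr (1 - p / 2) * (C powr (p / 2) * \<omega> u v powr (1 / 2))) * \<omega> v w powr (1 / p)"
    using Xe gb[of v w] uvw by (intro mult_mono) auto
  also have "\<dots> \<le> (\<epsilon> powr (1 - p / 2) * (C powr (p / 2) * \<omega> u w powr (1 / 2))) * \<omega> u w powr (1 / p)"
    using m1 n C p by (intro mult_mono mult_left_mono powr_mono2) auto
  also have "\<dots> = (\<epsilon> powr (1 - p / 2) * C powr (p / 2)) * \<omega> u w powr (1 / 2 + 1 / p)"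
    by (simp add: mult.assoc powr_add)
  finally show ?thesis .
qed

(* ---- part P6 ---- *)
lemma frac_lt:
  fixes e A :: real assumes "0 < e" "0 \<le> A"
  shows "e / (2 * (A + 1)) * A < e / 2" "2 * (e / (2 * (A + 1)) * A) < e"
proof -
  have "A / (A + 1) < 1" using assms by simp
  then have lt: "(e / 2) * (A / (A + 1)) < (e / 2) * 1" using assms by (intro mult_strict_left_mono) auto
  have eq: "e / (2 * (A + 1)) * A = (e / 2) * (A / (A + 1))" using assms by simp
  show "e / (2 * (A + 1)) * A < e / 2" unfolding eq using lt by simp
  show "2 * (e / (2 * (A + 1)) * A) < e" unfolding eq using lt by linarith
qed

lemma sum_list_cmult_pair: "(\<Sum>(s,t)\<leftarrow>xs. c * f s t) = (c::real) * (\<Sum>(s,t)\<leftarrow>xs. f s t)"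
  by (induction xs) (auto simp: algebra_simps)

lemma sum_powr_partition:
  assumes om: "superadd \<omega> 0 T" and th: "1 \<le> \<theta>"
    and P: "is_partition a b P" and ab: "0 \<le> a" "b \<le> T"
  shows "(\<Sum>(s,t)\<leftarrow>intervals_of P. \<omega> s t powr \<theta>) \<le> \<omega> a b powr \<theta>"
proof -
  have "(\<Sum>(s,t)\<leftarrow>intervals_of P. \<omega> s t powr \<theta>) \<le> (\<Sum>(s,t)\<leftarrow>intervals_of P. \<omega> a b powr (\<theta> - 1) * \<omega> s t)"
  proof (rule sum_list_mono)
    fix x assume x: "x \<in> set (intervals_of P)"
    obtain s t where xst: "x = (s, t)" by (cases x)
    have "s \<in> set P" "t \<in> set P" "s < t" using set_intervals_of[of s t P] sorted_intervals_of[of P s t] x xst P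
      by (auto simp: is_partition_def)
    then have st: "a \<le> s" "t \<le> b" "s \<le> t" using is_partition_set[OF P] by auto
    have n: "0 \<le> \<omega> s t" using superaddD(2)[OF om] st ab by auto
    have m: "\<omega> s t \<le> \<omega> a b" using superadd_mono[OF om] st ab by auto
    have "\<omega> s t powr \<theta> = \<omega> s t powr ((\<theta> - 1) + 1)" by simp
    also have "\<dots> = \<omega> s t powr (\<theta> - 1) * \<omega> s t"
      using n by (simp only: powr_add powr_one)
    also have "\<dots> \<le> \<omega> a b powr (\<theta> - 1) * \<omega> s t"
      using n m th by (intro mult_right_mono powr_mono2) auto
    finally show "(case x of (s, t) \<Rightarrow> \<omega> s t powr \<theta>) \<le> (case x of (s, t) \<Rightarrow> \<omega> a b powr (\<theta> - 1) * \<omega> s t)"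
      by (simp add: xst)
  qed
  also have "\<dots> = \<omega> a b powr (\<theta> - 1) * (\<Sum>(s,t)\<leftarrow>intervals_of P. \<omega> s t)"
    by (rule sum_list_cmult_pair)
  also have "\<dots> \<le> \<omega> a b powr (\<theta> - 1) * \<omega> a b"
    using superadd_sum_partition[OF om P] ab by (intro mult_left_mono) auto
  also have "\<dots> = \<omega> a b powr \<theta>"
  proof -
    have n: "0 \<le> \<omega> a b" using superaddD(2)[OF om] ab is_partition_le[OF P] by auto
    have "\<omega> a b powr \<theta> = \<omega> a b powr ((\<theta> - 1) + 1)" by simp
    also have "\<dots> = \<omega> a b powr (\<theta> - 1) * \<omega> a b"
      using n by (simp only: powr_add powr_one)
    finally show ?thesis by simp
  qed
  finally show ?thesis .
qed

lemma mesh_append: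
  assumes "is_partition a c P1" "is_partition c b P2" "mesh P1 < d" "mesh P2 < d" "0 < d"
  shows "mesh (P1 @ tl P2) < d"
proof -
  have "intervals_of (P1 @ tl P2) = intervals_of P1 @ intervals_of P2"
    using part_ne[OF assms(1)] part_ne[OF assms(2)] by (intro intervals_of_append) auto
  then show ?thesis using assms(3-5) by (auto simp: mesh_lt)
qed

locale ystep =
  fixes p T :: real and \<omega> :: "real \<Rightarrow> real \<Rightarrow> real" and X g :: "real \<Rightarrow> real" and C B :: real
  assumes p1: "1 \<le> p" and p2: "p < 2" and T0: "0 \<le> T" and om: "superadd \<omega> 0 T"
    and gc: "continuous_on {0..T} g"
    and gb: "\<And>s t. 0 \<le> s \<Longrightarrow> s \<le> t \<Longrightarrow> t \<le> T \<Longrightarrow> \<bar>g t - g s\<bar> \<le> \<omega> s t powr (1 / p)"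
    and Xc: "continuous_on {0..T} X"
    and Xb: "\<And>s t. 0 \<le> s \<Longrightarrow> s \<le> t \<Longrightarrow> t \<le> T \<Longrightarrow> \<bar>X t - X s\<bar> \<le> C * \<omega> s t powr (1 / p)"
    and C0: "0 \<le> C"
    and XB: "\<And>t. 0 \<le> t \<Longrightarrow> t \<le> T \<Longrightarrow> \<bar>X t\<bar> \<le> B"
begin

definition "th' = 1 / 2 + 1 / p"
definition "W = \<omega> 0 T"
definition "F t = young_integral (*) X g 0 t"

lemma th'_gt: "1 < th'" using p1 p2 by (simp add: th'_def field_simps)
lemma th2_gt: "1 < 2 / p" using p1 p2 by (simp add: field_simps)
lemma p0: "0 < p" using p1 by simp
lemma W0: "0 \<le> W" using superaddD(2)[OF om] T0 by (simp add: W_def)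

lemma om_le_W: "0 \<le> s \<Longrightarrow> s \<le> t \<Longrightarrow> t \<le> T \<Longrightarrow> \<omega> s t \<le> W"
  using superadd_mono[OF om, of 0 s t T] T0 by (simp add: W_def)

lemma om_nn: "0 \<le> s \<Longrightarrow> s \<le> t \<Longrightarrow> t \<le> T \<Longrightarrow> 0 \<le> \<omega> s t"
  using superaddD(2)[OF om] by simp

lemma B0: "0 \<le> B" using XB[of 0] T0 by linarith

lemma local_YL:
  assumes st: "0 \<le> s" "s \<le> t" "t \<le> T"
    and eps: "\<And>u v. s \<le> u \<Longrightarrow> u \<le> v \<Longrightarrow> v \<le> t \<Longrightarrow> \<bar>X v - X u\<bar> \<le> \<epsilon>"
    and L: "is_partition s t L"
  shows "\<bar>rsum X g L - X s * (g t - g s)\<bar> \<le> (\<epsilon> powr (1 - p / 2) * C powr (p / 2)) * Kc th' * \<omega> s t powr th'"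
proof -
  have "superadd \<omega> s t" using superadd_sub[OF om] st by simp
  then show ?thesis
  proof (rule young_loeve[OF _ _ th'_gt _ L])
    show "0 \<le> \<epsilon> powr (1 - p / 2) * C powr (p / 2)" by simp
    fix u v w assume "s \<le> u" "u \<le> v" "v \<le> w" "w \<le> t"
    then show "\<bar>(X v - X u) * (g w - g v)\<bar> \<le> \<epsilon> powr (1 - p / 2) * C powr (p / 2) * \<omega> u w powr th'"
      unfolding th'_def using H_local[OF om p0 _ gb Xb C0, of u v w \<epsilon>] p2 eps st by auto
  qed
qed

lemma global_YL:
  assumes st: "0 \<le> s" "s \<le> t" "t \<le> T"
    and L: "is_partition s t L"
  shows "\<bar>rsum X g L - X s * (g t - g s)\<bar> \<le> C * Kc (2 / p) * \<omega> s t powr (2 / p)"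
proof -
  have "superadd \<omega> s t" using superadd_sub[OF om] st by simp
  then show ?thesis
  proof (rule young_loeve[OF _ C0 th2_gt _ L])
    fix u v w assume "s \<le> u" "u \<le> v" "v \<le> w" "w \<le> t"
    then show "\<bar>(X v - X u) * (g w - g v)\<bar> \<le> C * \<omega> u w powr (2 / p)"
      using H_global[OF om p0 gb Xb C0, of u v w] st by auto
  qed
qed

lemma small_eps:
  assumes eta: "0 < \<eta>"
  shows "\<exists>\<delta>>0. \<forall>s t L. 0 \<le> s \<longrightarrow> s \<le> t \<longrightarrow> t \<le> T \<longrightarrow> t - s < \<delta> \<longrightarrow> is_partition s t L \<longrightarrow>
           \<bar>rsum X g L - X s * (g t - g s)\<bar> \<le> \<eta> * \<omega> s t powr th'"
proof -
  define M where "M = C powr (p / 2) * Kc th'"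
  have M0: "0 \<le> M" using Kc_nonneg[OF th'_gt] by (simp add: M_def)
  define \<alpha> where "\<alpha> = 1 - p / 2"
  have a0: "0 < \<alpha>" using p2 by (simp add: \<alpha>_def)
  define \<epsilon> where "\<epsilon> = (\<eta> / (M + 1)) powr (1 / \<alpha>)"
  have e0: "0 < \<epsilon>" using eta M0 by (simp add: \<epsilon>_def)
  have ea: "\<epsilon> powr \<alpha> = \<eta> / (M + 1)" using eta M0 a0 by (simp add: \<epsilon>_def powr_powr)
  have "uniformly_continuous_on {0..T} X" using Xc by (simp add: compact_uniformly_continuous)
  then obtain \<delta> where d: "\<delta> > 0" "\<And>u v. u \<in> {0..T} \<Longrightarrow> v \<in> {0..T} \<Longrightarrow> dist v u < \<delta> \<Longrightarrow> dist (X v) (X u) < \<epsilon>"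
    unfolding uniformly_continuous_on_def using e0 by metis
  have "\<bar>rsum X g L - X s * (g t - g s)\<bar> \<le> \<eta> * \<omega> s t powr th'"
    if st: "0 \<le> s" "s \<le> t" "t \<le> T" "t - s < \<delta>" and L: "is_partition s t L" for s t L
  proof -
    have "\<bar>X v - X u\<bar> \<le> \<epsilon>" if "s \<le> u" "u \<le> v" "v \<le> t" for u v
      using d(2)[of u v] that st by (auto simp: dist_real_def)
    then have "\<bar>rsum X g L - X s * (g t - g s)\<bar> \<le> (\<epsilon> powr \<alpha> * C powr (p / 2)) * Kc th' * \<omega> s t powr th'"
      using local_YL[OF st(1-3) _ L] unfolding \<alpha>_def by blast
    also have "\<dots> = (\<eta> / (M + 1) * M) * \<omega> s t powr th'" by (simp add: ea M_def)
    also have "\<dots> \<le> \<eta> * \<omega> s t powr th'"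
    proof -
      have "\<eta> / (M + 1) * M \<le> \<eta>" using eta M0 by (simp add: field_simps)
      then show ?thesis by (intro mult_right_mono) auto
    qed
    finally show ?thesis .
  qed
  then show ?thesis using d(1) by blast
qed

lemma exists:
  assumes t: "0 \<le> t" "t \<le> T"
  shows "\<exists>I. has_young_integral (*) X g 0 t I"
proof (rule young_exists_cauchy[OF t(1)])
  fix e :: real assume e: "e > 0"
  define \<eta> where "\<eta> = e / (2 * (W powr th' + 1))"
  have "0 < W powr th' + 1" using powr_ge_zero[of W th'] by linarith
  then have eta: "0 < \<eta>" unfolding \<eta>_def by (intro divide_pos_pos) (use e in auto)
  obtain \<delta> where d: "\<delta> > 0" "\<And>s t L. 0 \<le> s \<Longrightarrow> s \<le> t \<Longrightarrow> t \<le> T \<Longrightarrow> t - s < \<delta> \<Longrightarrow> is_partition s t L \<Longrightarrow>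
           \<bar>rsum X g L - X s * (g t - g s)\<bar> \<le> \<eta> * \<omega> s t powr th'"
    using small_eps[OF eta] by blast
  have one: "\<bar>rsum X g (merge P Q) - rsum X g P\<bar> \<le> \<eta> * W powr th'"
    if P: "is_partition 0 t P" "mesh P < \<delta>" and Q: "is_partition 0 t Q" for P Q
  proof -
    have "\<bar>rsum X g (merge P Q) - rsum X g P\<bar> \<le> (\<Sum>(s,t')\<leftarrow>intervals_of P. \<eta> * \<omega> s t' powr th')"
    proof (rule refine[OF P(1) merge_partition(1)[OF P(1) Q] merge_partition(2)[OF P(1) Q]])
      fix s t' L assume int: "(s, t') \<in> set (intervals_of P)" and L: "is_partition s t' L"
      have "s \<in> set P" "t' \<in> set P" "s < t'" using set_intervals_of[OF int] sorted_intervals_of[OF _ int] P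
        by (auto simp: is_partition_def)
      moreover have "t' - s < \<delta>" using P(2) int d(1) by (auto simp: mesh_lt)
      ultimately show "\<bar>rsum X g L - X s * (g t' - g s)\<bar> \<le> \<eta> * \<omega> s t' powr th'"
        using is_partition_set[OF P(1)] t by (intro d(2) L) force+
    qed
    also have "\<dots> = \<eta> * (\<Sum>(s,t')\<leftarrow>intervals_of P. \<omega> s t' powr th')"
      by (rule sum_list_cmult_pair)
    also have "\<dots> \<le> \<eta> * \<omega> 0 t powr th'"
      using sum_powr_partition[OF om _ P(1)] th'_gt t eta by (intro mult_left_mono) auto
    also have "\<dots> \<le> \<eta> * W powr th'"
      using om_le_W[of 0 t] om_nn[of 0 t] t eta th'_gt by (intro mult_left_mono powr_mono2) auto
    finally show ?thesis .
  qed
  have "\<bar>rsum X g P - rsum X g Q\<bar> < e"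
    if "is_partition 0 t P \<and> mesh P < \<delta> \<and> is_partition 0 t Q \<and> mesh Q < \<delta>" for P Q
  proof -
    have "merge Q P = merge P Q" by (simp add: merge_def Un_commute)
    then have "\<bar>rsum X g P - rsum X g Q\<bar> \<le> 2 * (\<eta> * W powr th')"
      using one[of P Q] one[of Q P] that by auto
    also have "\<dots> < e" using frac_lt[OF e, of "W powr th'"] by (simp add: \<eta>_def)
    finally show ?thesis .
  qed
  then show "\<exists>\<delta>>0. \<forall>P Q. is_partition 0 t P \<and> mesh P < \<delta> \<and> is_partition 0 t Q \<and> mesh Q < \<delta> \<longrightarrow>
      \<bar>rsum X g P - rsum X g Q\<bar> < e" using d(1) by blast
qed

lemma F_has: "0 \<le> t \<Longrightarrow> t \<le> T \<Longrightarrow> has_young_integral (*) X g 0 t (F t)"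
  using exists young_integral_eq unfolding F_def by metis

lemma F_incr:
  assumes st: "0 \<le> s" "s \<le> t" "t \<le> T"
    and bd: "\<And>L. is_partition s t L \<Longrightarrow> \<bar>rsum X g L - X s * (g t - g s)\<bar> \<le> Bd"
  shows "\<bar>F t - F s - X s * (g t - g s)\<bar> \<le> Bd"
proof (rule field_le_epsilon)
  fix e :: real assume e: "0 < e"
  have "has_young_integral (*) X g 0 s (F s)" using F_has st by simp
  then have h1: "\<forall>e>0. \<exists>\<delta>>0. \<forall>ts. is_partition 0 s ts \<and> mesh ts < \<delta> \<longrightarrow> \<bar>rsum X g ts - F s\<bar> < e"
    unfolding has_young_integral_rsum .
  have "has_young_integral (*) X g 0 t (F t)" using F_has st by simp
  then have h2: "\<forall>e>0. \<exists>\<delta>>0. \<forall>ts. is_partition 0 t ts \<and> mesh ts < \<delta> \<longrightarrow> \<bar>rsum X g ts - F t\<bar> < e"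
    unfolding has_young_integral_rsum .
  from h1[rule_format, of "e / 2"] e obtain d1 where
    d1: "d1 > 0" "\<And>ts. is_partition 0 s ts \<and> mesh ts < d1 \<Longrightarrow> \<bar>rsum X g ts - F s\<bar> < e / 2" by auto
  from h2[rule_format, of "e / 2"] e obtain d2 where
    d2: "d2 > 0" "\<And>ts. is_partition 0 t ts \<and> mesh ts < d2 \<Longrightarrow> \<bar>rsum X g ts - F t\<bar> < e / 2" by auto
  define d where "d = min d1 d2"
  have d: "d > 0" using d1 d2 by (simp add: d_def)
  obtain N1 where N1: "\<And>n. n \<ge> N1 \<Longrightarrow> is_partition 0 s (upart 0 s (Suc n)) \<and> mesh (upart 0 s (Suc n)) < d"
    using small_mesh_partition[OF st(1) d] by blast
  obtain N2 where N2: "\<And>n. n \<ge> N2 \<Longrightarrow> is_partition s t (upart s t (Suc n)) \<and> mesh (upart s t (Suc n)) < d"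
    using small_mesh_partition[OF st(2) d] by blast
  define P1 where "P1 = upart 0 s (Suc (max N1 N2))"
  define P2 where "P2 = upart s t (Suc (max N1 N2))"
  have P1: "is_partition 0 s P1" "mesh P1 < d" using N1[of "max N1 N2"] by (auto simp: P1_def)
  have P2: "is_partition s t P2" "mesh P2 < d" using N2[of "max N1 N2"] by (auto simp: P2_def)
  have P: "is_partition 0 t (P1 @ tl P2)" "mesh (P1 @ tl P2) < d"
    using is_partition_append[OF P1(1) P2(1)] mesh_append[OF P1(1) P2(1) P1(2) P2(2) d] by blast+
  have dd: "d \<le> d1" "d \<le> d2" by (simp_all add: d_def)
  have rs: "rsum X g (P1 @ tl P2) = rsum X g P1 + rsum X g P2"
    using part_ne[OF P1(1)] part_ne[OF P2(1)] by (intro rsum_append) auto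
  have "\<bar>rsum X g P1 - F s\<bar> < e / 2" using d1(2)[of P1] P1 dd by linarith
  moreover have "\<bar>rsum X g (P1 @ tl P2) - F t\<bar> < e / 2" using d2(2)[of "P1 @ tl P2"] P dd by linarith
  moreover have "\<bar>rsum X g P2 - X s * (g t - g s)\<bar> \<le> Bd" using bd[OF P2(1)] .
  ultimately show "\<bar>F t - F s - X s * (g t - g s)\<bar> \<le> Bd + e" using rs by linarith
qed

lemma F0: "F 0 = 0"
proof -
  have "has_young_integral (*) X g 0 0 0"
    unfolding has_young_integral_def using is_partition_single by auto
  then show ?thesis unfolding F_def by (rule young_integral_eq[OF order_refl])
qed

lemma F_bound2:
  assumes st: "0 \<le> s" "s \<le> t" "t \<le> T"
  shows "\<bar>F t - F s - X s * (g t - g s)\<bar> \<le> C * Kc (2 / p) * \<omega> s t powr (2 / p)"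
  using F_incr[OF st global_YL[OF st]] .

definition "K1 = B + C * Kc (2 / p) * W powr (1 / p)"

lemma K1_nn: "0 \<le> K1"
  unfolding K1_def using B0 C0 Kc_nonneg[OF th2_gt] by simp

lemma F_lip:
  assumes st: "0 \<le> s" "s \<le> t" "t \<le> T"
  shows "\<bar>F t - F s\<bar> \<le> K1 * \<omega> s t powr (1 / p)"
proof -
  have n: "0 \<le> \<omega> s t" "\<omega> s t \<le> W" using om_nn om_le_W st by auto
  have "\<bar>X s * (g t - g s)\<bar> \<le> B * \<omega> s t powr (1 / p)"
    unfolding abs_mult using XB[of s] gb[OF st] st B0 by (intro mult_mono) auto
  moreover have "\<omega> s t powr (2 / p) \<le> W powr (1 / p) * \<omega> s t powr (1 / p)"
  proof -
    have "\<omega> s t powr (2 / p) = \<omega> s t powr (1 / p) * \<omega> s t powr (1 / p)"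
      by (simp add: powr_add[symmetric])
    also have "\<dots> \<le> W powr (1 / p) * \<omega> s t powr (1 / p)"
      using n p0 by (intro mult_right_mono powr_mono2) auto
    finally show ?thesis .
  qed
  then have "C * Kc (2 / p) * \<omega> s t powr (2 / p) \<le> C * Kc (2 / p) * (W powr (1 / p) * \<omega> s t powr (1 / p))"
    using C0 Kc_nonneg[OF th2_gt] by (intro mult_left_mono) auto
  ultimately show ?thesis using F_bound2[OF st] unfolding K1_def by (simp add: algebra_simps)
qed

lemma F_bd:
  assumes t: "0 \<le> t" "t \<le> T"
  shows "\<bar>F t\<bar> \<le> K1 * W powr (1 / p)"
proof -
  have "\<bar>F t\<bar> \<le> K1 * \<omega> 0 t powr (1 / p)" using F_lip[of 0 t] t F0 by simp
  also have "\<dots> \<le> K1 * W powr (1 / p)"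
    using om_nn[of 0 t] om_le_W[of 0 t] t K1_nn p0 by (intro mult_left_mono powr_mono2) auto
  finally show ?thesis .
qed

lemma F_cont: "continuous_on {0..T} F"
proof -
  have "uniformly_continuous_on {0..T} F"
    unfolding uniformly_continuous_on_def
  proof (intro allI impI)
    fix e :: real assume e: "0 < e"
    define \<eta> where "\<eta> = e / (2 * (W powr th' + 1))"
    have "0 < W powr th' + 1" using powr_ge_zero[of W th'] by linarith
  then have eta: "0 < \<eta>" unfolding \<eta>_def by (intro divide_pos_pos) (use e in auto)
    obtain d1 where d1: "d1 > 0" "\<And>s t L. 0 \<le> s \<Longrightarrow> s \<le> t \<Longrightarrow> t \<le> T \<Longrightarrow> t - s < d1 \<Longrightarrow> is_partition s t L \<Longrightarrow>
           \<bar>rsum X g L - X s * (g t - g s)\<bar> \<le> \<eta> * \<omega> s t powr th'"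
      using small_eps[OF eta] by blast
    have uc: "uniformly_continuous_on {0..T} g" using gc by (simp add: compact_uniformly_continuous)
    have pos: "0 < e / (2 * (B + 1))" using e B0 by (intro divide_pos_pos) auto
    from uc[unfolded uniformly_continuous_on_def, rule_format, OF pos]
    obtain d2 where d2: "d2 > 0" "\<And>u v. u \<in> {0..T} \<Longrightarrow> v \<in> {0..T} \<Longrightarrow> dist v u < d2 \<Longrightarrow> dist (g v) (g u) < e / (2 * (B + 1))"
      by blast
    define d where "d = min d1 d2"
    have main: "\<bar>F t - F s\<bar> < e" if st: "0 \<le> s" "s \<le> t" "t \<le> T" "t - s < d" for s t
    proof -
      have "\<bar>F t - F s - X s * (g t - g s)\<bar> \<le> \<eta> * \<omega> s t powr th'"
        using st d1(2) by (intro F_incr) (auto simp: d_def)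
      also have "\<dots> \<le> \<eta> * W powr th'"
        using om_nn[of s t] om_le_W[of s t] st eta th'_gt by (intro mult_left_mono powr_mono2) auto
      also have "\<dots> < e / 2" using frac_lt[OF e, of "W powr th'"] by (simp add: \<eta>_def)
      finally have 1: "\<bar>F t - F s - X s * (g t - g s)\<bar> < e / 2" .
      have "\<bar>g t - g s\<bar> < e / (2 * (B + 1))" using d2(2)[of s t] st by (auto simp: d_def dist_real_def)
      then have "\<bar>X s * (g t - g s)\<bar> \<le> B * (e / (2 * (B + 1)))"
        unfolding abs_mult using XB[of s] st B0 by (intro mult_mono) auto
      also have "\<dots> = e / (2 * (B + 1)) * B" by (rule mult.commute)
      also have "\<dots> < e / 2" using frac_lt[OF e B0] by simp
      finally show ?thesis using 1 by linarith
    qed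
    show "\<exists>d>0. \<forall>x\<in>{0..T}. \<forall>x'\<in>{0..T}. dist x' x < d \<longrightarrow> dist (F x') (F x) < e"
    proof (intro exI[of _ d] conjI ballI impI)
      show "0 < d" using d1 d2 by (simp add: d_def)
      fix x x' assume xx: "x \<in> {0..T}" "x' \<in> {0..T}" "dist x' x < d"
      show "dist (F x') (F x) < e"
      proof (cases "x \<le> x'")
        case True
        then have "x' - x < d" using xx(3) by (simp add: dist_real_def)
        then show ?thesis using main[of x x'] xx True by (simp add: dist_real_def)
      next
        case False
        then have "x - x' < d" using xx(3) by (simp add: dist_real_def)
        then have "\<bar>F x - F x'\<bar> < e" using main[of x' x] xx False by simp
        then show ?thesis by (metis abs_minus_commute dist_real_def)
      qed
    qed
  qed
  then show ?thesis by (rule uniformly_continuous_imp_continuous)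
qed

end

(* ---- part P7 ---- *)
locale sigctx =
  fixes p T :: real and \<gamma> :: "real \<Rightarrow> real^'d"
  assumes p1: "1 \<le> p" and p2: "p < 2" and T0: "0 \<le> T"
    and gc: "continuous_on {0..T} \<gamma>" and bv: "bounded_p_variation p \<gamma> 0 T"
begin

abbreviation "\<omega> \<equiv> pv p \<gamma>"
definition "W = \<omega> 0 T"
definition "K = Kc (2 / p)"
definition "R = (1 + K * W powr (1 / p)) * (1 + W powr (1 / p))"

lemma p0: "0 < p" using p1 by simp
lemma om: "superadd \<omega> 0 T" using pv_superadd[OF bv] .
lemma W0: "0 \<le> W" using superaddD(2)[OF om] T0 by (simp add: W_def)
lemma K0: "0 \<le> K" unfolding K_def using p1 p2 by (intro Kc_nonneg) (simp add: field_simps)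
lemma R1: "1 \<le> R"
proof -
  have "1 \<le> 1 + K * W powr (1 / p)" "1 \<le> 1 + W powr (1 / p)" using K0 by simp_all
  then have "1 * 1 \<le> (1 + K * W powr (1 / p)) * (1 + W powr (1 / p))" by (intro mult_mono) auto
  then show ?thesis unfolding R_def by simp
qed
lemma R0: "0 \<le> R" using R1 by simp

lemma sig_props:
  "continuous_on {0..T} (sig_rev \<gamma> v) \<and>
   (\<forall>s t. 0 \<le> s \<longrightarrow> s \<le> t \<longrightarrow> t \<le> T \<longrightarrow> \<bar>sig_rev \<gamma> v t - sig_rev \<gamma> v s\<bar> \<le> R ^ length v * \<omega> s t powr (1 / p)) \<and>
   (\<forall>t. 0 \<le> t \<longrightarrow> t \<le> T \<longrightarrow> \<bar>sig_rev \<gamma> v t\<bar> \<le> R ^ length v)"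
proof (induction v)
  case Nil
  have "0 \<le> \<omega> s t powr (1 / p)" for s t by simp
  then show ?case by simp
next
  case (Cons a v)
  interpret Y: ystep p T \<omega> "sig_rev \<gamma> v" "\<lambda>s. \<gamma> s $ a" "R ^ length v" "R ^ length v"
  proof
    show "1 \<le> p" "p < 2" "0 \<le> T" by (fact p1, fact p2, fact T0)
    show "superadd \<omega> 0 T" by (fact om)
    show "continuous_on {0..T} (\<lambda>s. \<gamma> s $ a)" using gc by (rule continuous_on_component)
    show "\<And>s t. 0 \<le> s \<Longrightarrow> s \<le> t \<Longrightarrow> t \<le> T \<Longrightarrow> \<bar>\<gamma> t $ a - \<gamma> s $ a\<bar> \<le> \<omega> s t powr (1 / p)"
      using comp_le_pv[OF bv _ _ _ p0] by blast
    show "continuous_on {0..T} (sig_rev \<gamma> v)" using Cons by blast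
    show "\<And>s t. 0 \<le> s \<Longrightarrow> s \<le> t \<Longrightarrow> t \<le> T \<Longrightarrow>
      \<bar>sig_rev \<gamma> v t - sig_rev \<gamma> v s\<bar> \<le> R ^ length v * \<omega> s t powr (1 / p)" using Cons by blast
    show "0 \<le> R ^ length v" using R0 by simp
    show "\<And>t. 0 \<le> t \<Longrightarrow> t \<le> T \<Longrightarrow> \<bar>sig_rev \<gamma> v t\<bar> \<le> R ^ length v" using Cons by blast
  qed
  have F: "sig_rev \<gamma> (a # v) = Y.F" by (simp add: Y.F_def fun_eq_iff)
  have YW: "Y.W = W" by (simp add: Y.W_def W_def)
  have K1: "Y.K1 = R ^ length v * (1 + K * W powr (1 / p))"
    unfolding Y.K1_def YW K_def by (simp add: algebra_simps)
  have K1R: "Y.K1 \<le> R ^ length (a # v)"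
  proof -
    have "(1 + K * W powr (1 / p)) * 1 \<le> (1 + K * W powr (1 / p)) * (1 + W powr (1 / p))"
      using K0 by (intro mult_left_mono) auto
    then have "1 + K * W powr (1 / p) \<le> R" unfolding R_def by simp
    then have "R ^ length v * (1 + K * W powr (1 / p)) \<le> R ^ length v * R"
      using R0 by (intro mult_left_mono) auto
    then show ?thesis unfolding K1 by (simp add: mult.commute)
  qed
  have K1W: "Y.K1 * W powr (1 / p) \<le> R ^ length (a # v)"
  proof -
    have "(1 + K * W powr (1 / p)) * W powr (1 / p) \<le> R" unfolding R_def using K0
      by (intro mult_left_mono) auto
    then have "R ^ length v * ((1 + K * W powr (1 / p)) * W powr (1 / p)) \<le> R ^ length v * R"
      using R0 by (intro mult_left_mono) auto
    then show ?thesis unfolding K1 by (simp add: algebra_simps)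
  qed
  show ?case
  proof (intro conjI allI impI)
    show "continuous_on {0..T} (sig_rev \<gamma> (a # v))" unfolding F by (rule Y.F_cont)
  next
    fix s t :: real assume st: "0 \<le> s" "s \<le> t" "t \<le> T"
    have "\<bar>Y.F t - Y.F s\<bar> \<le> Y.K1 * \<omega> s t powr (1 / p)" using Y.F_lip[OF st] .
    also have "\<dots> \<le> R ^ length (a # v) * \<omega> s t powr (1 / p)"
      using K1R by (intro mult_right_mono) auto
    finally show "\<bar>sig_rev \<gamma> (a # v) t - sig_rev \<gamma> (a # v) s\<bar> \<le> R ^ length (a # v) * \<omega> s t powr (1 / p)"
      unfolding F .
  next
    fix t :: real assume t: "0 \<le> t" "t \<le> T"
    have "\<bar>Y.F t\<bar> \<le> Y.K1 * Y.W powr (1 / p)" using Y.F_bd[OF t] .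
    then show "\<bar>sig_rev \<gamma> (a # v) t\<bar> \<le> R ^ length (a # v)" unfolding F YW using K1W by linarith
  qed
qed

lemma sig_has:
  assumes t: "0 \<le> t" "t \<le> T"
  shows "has_young_integral (*) (sig_rev \<gamma> v) (\<lambda>s. \<gamma> s $ a) 0 t (sig_rev \<gamma> (a # v) t)"
proof -
  interpret Y: ystep p T \<omega> "sig_rev \<gamma> v" "\<lambda>s. \<gamma> s $ a" "R ^ length v" "R ^ length v"
  proof
    show "1 \<le> p" "p < 2" "0 \<le> T" by (fact p1, fact p2, fact T0)
    show "superadd \<omega> 0 T" by (fact om)
    show "continuous_on {0..T} (\<lambda>s. \<gamma> s $ a)" using gc by (rule continuous_on_component)
    show "\<And>s t. 0 \<le> s \<Longrightarrow> s \<le> t \<Longrightarrow> t \<le> T \<Longrightarrow> \<bar>\<gamma> t $ a - \<gamma> s $ a\<bar> \<le> \<omega> s t powr (1 / p)"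
      using comp_le_pv[OF bv _ _ _ p0] by blast
    show "continuous_on {0..T} (sig_rev \<gamma> v)" using sig_props by blast
    show "\<And>s t. 0 \<le> s \<Longrightarrow> s \<le> t \<Longrightarrow> t \<le> T \<Longrightarrow>
      \<bar>sig_rev \<gamma> v t - sig_rev \<gamma> v s\<bar> \<le> R ^ length v * \<omega> s t powr (1 / p)" using sig_props by blast
    show "0 \<le> R ^ length v" using R0 by simp
    show "\<And>t. 0 \<le> t \<Longrightarrow> t \<le> T \<Longrightarrow> \<bar>sig_rev \<gamma> v t\<bar> \<le> R ^ length v" using sig_props by blast
  qed
  show ?thesis using Y.F_has[OF t] by (simp add: Y.F_def)
qed

lemma sig_bound: "0 \<le> t \<Longrightarrow> t \<le> T \<Longrightarrow> \<bar>sig_rev \<gamma> v t\<bar> \<le> R ^ length v"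
  using sig_props by blast

end

(* ---- part P8 ---- *)
section \<open>Filter of partitions\<close>

definition pf :: "real \<Rightarrow> real \<Rightarrow> real list filter" where
  "pf a b = (INF d\<in>{0<..}. principal {ts. is_partition a b ts \<and> mesh ts < d})"

lemma eventually_pf:
  "eventually P (pf a b) \<longleftrightarrow> (\<exists>d>0. \<forall>ts. is_partition a b ts \<and> mesh ts < d \<longrightarrow> P ts)"
proof -
  have "eventually P (pf a b) \<longleftrightarrow> (\<exists>d\<in>{0<..}. eventually P (principal {ts. is_partition a b ts \<and> mesh ts < d}))"
    unfolding pf_def
  proof (rule eventually_INF_base)
    show "{0<..} \<noteq> ({} :: real set)" by auto
    fix x y :: real assume "x \<in> {0<..}" "y \<in> {0<..}"
    then show "\<exists>z\<in>{0<..}. principal {ts. is_partition a b ts \<and> mesh ts < z} \<le>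
       inf (principal {ts. is_partition a b ts \<and> mesh ts < x}) (principal {ts. is_partition a b ts \<and> mesh ts < y})"
      by (intro bexI[of _ "min x y"]) auto
  qed
  then show ?thesis by (auto simp: eventually_principal)
qed

lemma has_young_tendsto:
  "has_young_integral bil f g a b I \<longleftrightarrow>
     ((\<lambda>ts. \<Sum>(s,t)\<leftarrow>intervals_of ts. bil (f s) (g t - g s)) \<longlongrightarrow> I) (pf a b)"
  unfolding has_young_integral_def tendsto_iff eventually_pf ..

lemma eventually_pf_part: "eventually (\<lambda>ts. is_partition a b ts) (pf a b)"
  unfolding eventually_pf by (intro exI[of _ 1]) auto

section \<open>Matrix algebra\<close>

lemma mmul_add_left: "((A::'a::semiring_1^'n^'m) + B) ** C = A ** C + B ** C"
  by (vector matrix_matrix_mult_def sum.distrib[symmetric] field_simps)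

lemma mmul_sum_left: "(\<Sum>i\<in>I. f i) ** (C::'a::semiring_1^'n^'m) = (\<Sum>i\<in>I. f i ** C)"
  by (induction I rule: infinite_finite_induct) (auto simp: mmul_add_left)

lemma mmul_sum_right: "(C::'a::semiring_1^'n^'m) ** (\<Sum>i\<in>I. f i) = (\<Sum>i\<in>I. C ** f i)"
  by (induction I rule: infinite_finite_induct) (auto simp: matrix_add_ldistrib)

lemma mmul_scaleR_left: "(r *\<^sub>R (A::complex^'n^'m)) ** B = r *\<^sub>R (A ** B)"
  by (simp add: matrix_matrix_mult_def vec_eq_iff scaleR_sum_right)

lemma mmul_scaleR_right: "(A::complex^'n^'m) ** (r *\<^sub>R B) = r *\<^sub>R (A ** B)"
  by (simp add: matrix_matrix_mult_def vec_eq_iff scaleR_sum_right)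

fun prodM :: "(real^'d \<Rightarrow> complex^'k^'k) \<Rightarrow> 'd list \<Rightarrow> complex^'k^'k" where
  "prodM M [] = mat 1"
| "prodM M (a # w) = M (axis a 1) ** prodM M w"

lemma prodM_snoc: "prodM M (w @ [a]) = prodM M w ** M (axis a 1)"
  by (induction w) (auto simp: matrix_mul_assoc)

lemma linear_expand:
  fixes M :: "real^'d \<Rightarrow> 'b::real_vector"
  assumes "linear M"
  shows "M x = (\<Sum>a\<in>UNIV. x $ a *\<^sub>R M (axis a 1))"
proof -
  have "x = (\<Sum>a\<in>UNIV. x $ a *\<^sub>R axis a 1)"
    using basis_expansion[of x] by (simp add: scalar_mult_eq_scaleR)
  then have "M x = M (\<Sum>a\<in>UNIV. x $ a *\<^sub>R axis a 1)" by simp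
  also have "\<dots> = (\<Sum>a\<in>UNIV. x $ a *\<^sub>R M (axis a 1))"
    unfolding real_vector.linear_sum[OF assms] linear_cmul[OF assms] ..
  finally show ?thesis .
qed

lemma sum_list_swap2:
  "(\<Sum>x\<leftarrow>xs. \<Sum>i\<in>I. \<Sum>j\<in>J. c i j x *\<^sub>R (A i j :: 'b::real_vector)) =
   (\<Sum>i\<in>I. \<Sum>j\<in>J. (\<Sum>x\<leftarrow>xs. c i j x) *\<^sub>R A i j)"
  by (induction xs) (auto simp: sum.distrib scaleR_add_left)

lemma words_finite: "finite {v :: 'd::finite list. length v = n}"
  using finite_lists_length_eq[of "UNIV :: 'd set" n] by simp

lemma words_Suc:
  "(\<Sum>v\<in>{v :: 'd::finite list. length v = Suc n}. f v) = (\<Sum>v\<in>{v. length v = n}. \<Sum>a\<in>UNIV. f (a # v))"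
proof -
  have "(\<Sum>v\<in>{v :: 'd list. length v = Suc n}. f v) = (\<Sum>(a, v)\<in>UNIV \<times> {v. length v = n}. f (a # v))"
    by (rule sum.reindex_bij_witness[of _ "\<lambda>(a, v). a # v" "\<lambda>v. (hd v, tl v)"])
       (auto simp: length_Suc_conv)
  also have "\<dots> = (\<Sum>a\<in>UNIV. \<Sum>v\<in>{v. length v = n}. f (a # v))"
    by (rule sum.cartesian_product[symmetric])
  also have "\<dots> = (\<Sum>v\<in>{v. length v = n}. \<Sum>a\<in>UNIV. f (a # v))"
    by (rule sum.swap)
  finally show ?thesis .
qed

context sigctx
begin

lemma dev_formula:
  assumes M: "linear M"
  shows "0 \<le> t \<Longrightarrow> t \<le> T \<Longrightarrow>
    dev_term M \<gamma> n t = (\<Sum>v\<in>{v. length v = n}. sig_rev \<gamma> v t *\<^sub>R prodM M (rev v))"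
proof (induction n arbitrary: t)
  case 0
  have "{v :: 'd list. length v = 0} = {[]}" by auto
  then show ?case by simp
next
  case (Suc n)
  let ?E = "\<lambda>a. M (axis a 1)"
  let ?X = "\<lambda>v. sig_rev \<gamma> v"
  let ?g = "\<lambda>a s. \<gamma> s $ a"
  define Tgt where "Tgt = (\<Sum>v\<in>{v. length v = n}. \<Sum>a\<in>UNIV. ?X (a # v) t *\<^sub>R (prodM M (rev v) ** ?E a))"
  have lim: "((\<lambda>ts. \<Sum>v\<in>{v. length v = n}. \<Sum>a\<in>UNIV. rsum (?X v) (?g a) ts *\<^sub>R (prodM M (rev v) ** ?E a))
      \<longlongrightarrow> Tgt) (pf 0 t)"
    unfolding Tgt_def
  proof (intro tendsto_sum tendsto_scaleR tendsto_const)
    fix v :: "'d list" and a :: 'd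
    have "has_young_integral (*) (?X v) (?g a) 0 t (?X (a # v) t)" using sig_has Suc.prems by blast
    then show "((\<lambda>ts. rsum (?X v) (?g a) ts) \<longlongrightarrow> ?X (a # v) t) (pf 0 t)"
      unfolding has_young_tendsto rsum_def .
  qed
  have eq: "(\<Sum>(s,t')\<leftarrow>intervals_of ts. dev_term M \<gamma> n s ** (M (\<gamma> t') - M (\<gamma> s))) =
     (\<Sum>v\<in>{v. length v = n}. \<Sum>a\<in>UNIV. rsum (?X v) (?g a) ts *\<^sub>R (prodM M (rev v) ** ?E a))"
    if ts: "is_partition 0 t ts" for ts
  proof -
    have tm: "dev_term M \<gamma> n s ** (M (\<gamma> t') - M (\<gamma> s)) =
      (\<Sum>v\<in>{v. length v = n}. \<Sum>a\<in>UNIV. (?X v s * (?g a t' - ?g a s)) *\<^sub>R (prodM M (rev v) ** ?E a))"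
      if st: "(s, t') \<in> set (intervals_of ts)" for s t'
    proof -
      have s: "0 \<le> s" "s \<le> T" using set_intervals_of[OF st] is_partition_set[OF ts] Suc.prems by force+
      have "M (\<gamma> t') - M (\<gamma> s) = M (\<gamma> t' - \<gamma> s)" using real_vector.linear_diff[OF M] by simp
      also have "\<dots> = (\<Sum>a\<in>UNIV. (?g a t' - ?g a s) *\<^sub>R ?E a)" by (subst linear_expand[OF M]) simp
      finally have dM: "M (\<gamma> t') - M (\<gamma> s) = (\<Sum>a\<in>UNIV. (?g a t' - ?g a s) *\<^sub>R ?E a)" .
      show ?thesis
        unfolding Suc.IH[OF s] dM mmul_sum_left mmul_sum_right mmul_scaleR_left mmul_scaleR_right
          scaleR_sum_right scaleR_scaleR
        by (rule trans[OF sum.swap]) (simp add: mult.commute)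
    qed
    have "(\<Sum>(s,t')\<leftarrow>intervals_of ts. dev_term M \<gamma> n s ** (M (\<gamma> t') - M (\<gamma> s))) =
      (\<Sum>(s,t')\<leftarrow>intervals_of ts. \<Sum>v\<in>{v. length v = n}. \<Sum>a\<in>UNIV. (?X v s * (?g a t' - ?g a s)) *\<^sub>R (prodM M (rev v) ** ?E a))"
      using tm by (intro arg_cong[where f = sum_list] map_cong) auto
    also have "\<dots> = (\<Sum>x\<leftarrow>intervals_of ts. \<Sum>v\<in>{v. length v = n}. \<Sum>a\<in>UNIV.
         (case x of (s, t') \<Rightarrow> ?X v s * (?g a t' - ?g a s)) *\<^sub>R (prodM M (rev v) ** ?E a))"
      by (intro arg_cong[where f = sum_list] map_cong) auto
    also have "\<dots> = (\<Sum>v\<in>{v. length v = n}. \<Sum>a\<in>UNIV. (\<Sum>x\<leftarrow>intervals_of ts.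
         (case x of (s, t') \<Rightarrow> ?X v s * (?g a t' - ?g a s))) *\<^sub>R (prodM M (rev v) ** ?E a))"
      by (rule sum_list_swap2)
    finally show ?thesis by (simp add: rsum_def)
  qed
  have ev: "eventually (\<lambda>ts. (\<Sum>(s,t')\<leftarrow>intervals_of ts. dev_term M \<gamma> n s ** (M (\<gamma> t') - M (\<gamma> s))) =
     (\<Sum>v\<in>{v. length v = n}. \<Sum>a\<in>UNIV. rsum (?X v) (?g a) ts *\<^sub>R (prodM M (rev v) ** ?E a))) (pf 0 t)"
    by (rule eventually_mono[OF eventually_pf_part]) (rule eq)
  have "has_young_integral (**) (dev_term M \<gamma> n) (\<lambda>s. M (\<gamma> s)) 0 t Tgt"
    unfolding has_young_tendsto tendsto_cong[OF ev] by (rule lim)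
  then have "dev_term M \<gamma> (Suc n) t = Tgt"
    using young_integral_eq Suc.prems by simp
  also have "Tgt = (\<Sum>v\<in>{v. length v = Suc n}. sig_rev \<gamma> v t *\<^sub>R prodM M (rev v))"
    unfolding Tgt_def words_Suc by (simp add: prodM_snoc)
  finally show ?case .
qed

end

(* ---- part P9 ---- *)
lemma idx_pos_mono: "(i::'k::{finite,linorder}) < j \<Longrightarrow> idx_pos i < idx_pos j"
  unfolding idx_pos_def by (rule psubset_card_mono) auto

lemma idx_pos_inj: "idx_pos (i::'k::{finite,linorder}) = idx_pos j \<longleftrightarrow> i = j"
  using idx_pos_mono[of i j] idx_pos_mono[of j i] by (cases i j rule: linorder_cases) auto

lemma idx_pos_lt: "idx_pos (i::'k::{finite,linorder}) < CARD('k)"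
  unfolding idx_pos_def by (rule psubset_card_mono) auto

lemma idx_pos_surj:
  assumes "m < CARD('k::{finite,linorder})"
  shows "\<exists>i::'k. idx_pos i = m"
proof -
  have inj: "inj (idx_pos :: 'k \<Rightarrow> nat)" using idx_pos_inj by (auto intro: injI)
  have sub: "range (idx_pos :: 'k \<Rightarrow> nat) \<subseteq> {..<CARD('k)}" using idx_pos_lt by auto
  have "card (range (idx_pos :: 'k \<Rightarrow> nat)) = CARD('k)" using card_image[OF inj] by simp
  then have "range (idx_pos :: 'k \<Rightarrow> nat) = {..<CARD('k)}"
    using sub by (intro card_subset_eq) auto
  then show ?thesis using assms by (metis imageE lessThan_iff)
qed

definition Mw :: "'d list \<Rightarrow> nat \<Rightarrow> real^'d \<Rightarrow> ((complex, 'k::{finite,linorder}) vec, 'k) vec" where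
  "Mw w0 n x = (\<chi> i j. complex_of_real
     (if idx_pos j = idx_pos i + 1 \<and> idx_pos i < n then x $ (w0 ! idx_pos i)
      else if idx_pos i = idx_pos j + 1 \<and> idx_pos j < n then - (x $ (w0 ! idx_pos j)) else 0))"

lemma cscale: "r *\<^sub>R complex_of_real y = complex_of_real (r * y)"
  by (simp add: scaleR_conv_of_real)

lemma Mw_linear: "linear (Mw w0 n)"
  by (rule linearI) (auto simp: Mw_def vec_eq_iff cscale)

lemma Mw_tk: "Mw w0 n x \<in> tk_real"
  unfolding tk_real_def Mw_def by auto

lemma Mw_axis: "Mw w0 n (axis a 1) $ i $ j = complex_of_real
     (if idx_pos j = idx_pos i + 1 \<and> idx_pos i < n then (if w0 ! idx_pos i = a then 1 else 0)
      else if idx_pos i = idx_pos j + 1 \<and> idx_pos j < n then - (if w0 ! idx_pos j = a then 1 else 0) else 0)"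
  by (simp add: Mw_def axis_def)

lemma prodM_zero:
  "idx_pos j > idx_pos i + length u \<Longrightarrow> prodM (Mw w0 n) u $ i $ (j::'k::{finite,linorder}) = 0"
proof (induction u arbitrary: i)
  case Nil
  then have "i \<noteq> j" by auto
  then show ?case by (simp add: mat_def)
next
  case (Cons a u)
  have z: "Mw w0 n (axis a 1) $ i $ l * prodM (Mw w0 n) u $ l $ j = 0" for l
  proof (cases "idx_pos l = idx_pos i + 1 \<or> idx_pos i = idx_pos l + 1")
    case True
    then have "idx_pos j > idx_pos l + length u" using Cons.prems by auto
    then show ?thesis using Cons.IH by simp
  next
    case False
    then show ?thesis by (simp add: Mw_axis)
  qed
  have "prodM (Mw w0 n) (a # u) $ i $ j = (\<Sum>l\<in>UNIV. Mw w0 n (axis a 1) $ i $ l * prodM (Mw w0 n) u $ l $ j)"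
    by (simp add: matrix_matrix_mult_def)
  also have "\<dots> = 0" by (rule sum.neutral) (use z in auto)
  finally show ?case .
qed

lemma prodM_diag:
  "idx_pos j = idx_pos i + length u \<Longrightarrow>
   prodM (Mw w0 n) u $ i $ (j::'k::{finite,linorder}) =
     (if (\<forall>l<length u. idx_pos i + l < n \<and> u ! l = w0 ! (idx_pos i + l)) then 1 else 0)"
proof (induction u arbitrary: i)
  case Nil
  then have "i = j" using idx_pos_inj[of j i] by simp
  then show ?case by (simp add: mat_def)
next
  case (Cons a u)
  have "idx_pos i + 1 < CARD('k)" using Cons.prems idx_pos_lt[of j] by simp
  then obtain l1 :: 'k where l1: "idx_pos l1 = idx_pos i + 1" using idx_pos_surj by blast
  have zero: "Mw w0 n (axis a 1) $ i $ l * prodM (Mw w0 n) u $ l $ j = 0" if "l \<noteq> l1" for l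
  proof (cases "idx_pos i = idx_pos l + 1")
    case True
    then have "idx_pos j > idx_pos l + length u" using Cons.prems by auto
    then show ?thesis using prodM_zero[of l u j] by simp
  next
    case False
    have "idx_pos l \<noteq> idx_pos i + 1" using that l1 idx_pos_inj by metis
    then show ?thesis using False by (simp add: Mw_axis)
  qed
  have "prodM (Mw w0 n) (a # u) $ i $ j = (\<Sum>l\<in>UNIV. Mw w0 n (axis a 1) $ i $ l * prodM (Mw w0 n) u $ l $ j)"
    by (simp add: matrix_matrix_mult_def)
  also have "\<dots> = Mw w0 n (axis a 1) $ i $ l1 * prodM (Mw w0 n) u $ l1 $ j"
  proof -
    have "(\<Sum>l\<in>UNIV - {l1}. Mw w0 n (axis a 1) $ i $ l * prodM (Mw w0 n) u $ l $ j) = 0"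
      by (rule sum.neutral) (use zero in blast)
    then show ?thesis by (subst sum.remove[of UNIV l1]) auto
  qed
  also have "\<dots> = (if idx_pos i < n \<and> w0 ! idx_pos i = a then 1 else 0) *
      (if (\<forall>l<length u. idx_pos l1 + l < n \<and> u ! l = w0 ! (idx_pos l1 + l)) then 1 else 0)"
    using Cons.IH[of l1] Cons.prems l1 by (simp add: Mw_axis)
  also have "\<dots> = (if (\<forall>l<length (a # u). idx_pos i + l < n \<and> (a # u) ! l = w0 ! (idx_pos i + l)) then 1 else 0)"
  proof -
    have "(\<forall>l<length (a # u). idx_pos i + l < n \<and> (a # u) ! l = w0 ! (idx_pos i + l)) \<longleftrightarrow>
          (idx_pos i < n \<and> w0 ! idx_pos i = a) \<and> (\<forall>l<length u. idx_pos l1 + l < n \<and> u ! l = w0 ! (idx_pos l1 + l))"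
      unfolding l1 by (simp add: All_less_Suc2 add.commute add.left_commute) (auto simp: add.commute)
    then show ?thesis by auto
  qed
  finally show ?case .
qed

lemma prodM_bound: "norm (prodM (Mw w0 n) u $ i $ (j::'k::{finite,linorder})) \<le> real CARD('k) ^ length u"
proof (induction u arbitrary: i)
  case Nil
  then show ?case by (simp add: mat_def)
next
  case (Cons a u)
  have "norm (prodM (Mw w0 n) (a # u) $ i $ j) = norm (\<Sum>l\<in>UNIV. Mw w0 n (axis a 1) $ i $ l * prodM (Mw w0 n) u $ l $ j)"
    by (simp add: matrix_matrix_mult_def)
  also have "\<dots> \<le> (\<Sum>l\<in>UNIV. norm (Mw w0 n (axis a 1) $ i $ l * prodM (Mw w0 n) u $ l $ j))"
    by (rule norm_sum)
  also have "\<dots> \<le> (\<Sum>l\<in>(UNIV::'k set). real CARD('k) ^ length u)"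
  proof (rule sum_mono)
    fix l :: 'k
    have "norm (Mw w0 n (axis a 1) $ i $ l) \<le> 1" by (simp add: Mw_axis)
    then have "norm (Mw w0 n (axis a 1) $ i $ l) * norm (prodM (Mw w0 n) u $ l $ j) \<le> 1 * real CARD('k) ^ length u"
      using Cons.IH[of l] by (intro mult_mono) auto
    then show "norm (Mw w0 n (axis a 1) $ i $ l * prodM (Mw w0 n) u $ l $ j) \<le> real CARD('k) ^ length u"
      by (simp add: norm_mult)
  qed
  also have "\<dots> = real CARD('k) ^ length (a # u)" by simp
  finally show ?case .
qed

(* ---- part P10 ---- *)
lemma Mc_linear: "linear (\<lambda>x. (Mw w0 n (c *\<^sub>R x) :: ((complex, 'k::{finite,linorder}) vec, 'k) vec))"
proof (rule linearI)
  fix x y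
  show "Mw w0 n (c *\<^sub>R (x + y)) = Mw w0 n (c *\<^sub>R x) + Mw w0 n (c *\<^sub>R y)"
    by (simp add: scaleR_add_right real_vector.linear_add[OF Mw_linear])
next
  fix r x
  show "Mw w0 n (c *\<^sub>R (r *\<^sub>R x)) = r *\<^sub>R Mw w0 n (c *\<^sub>R x)"
    by (simp add: linear_cmul[OF Mw_linear])
qed

lemma cscale2: "r *\<^sub>R (z::complex) = complex_of_real r * z"
  by (simp add: scaleR_conv_of_real)

lemma norm_vec_le_sum: "norm (x :: 'a::real_normed_vector^'n) \<le> (\<Sum>i\<in>UNIV. norm (x $ i))"
  unfolding norm_vec_def by (rule L2_set_le_sum) auto

lemma prodM_scale: "prodM (\<lambda>x. Mw w0 n (c *\<^sub>R x)) u = (c ^ length u) *\<^sub>R prodM (Mw w0 n) u"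
  by (induction u) (auto simp: linear_cmul[OF Mw_linear] mmul_scaleR_left mmul_scaleR_right)

context sigctx
begin

definition ent :: "'d list \<Rightarrow> nat \<Rightarrow> nat \<Rightarrow> 'k::{finite,linorder} \<Rightarrow> 'k \<Rightarrow> complex" where
  "ent w0 n m i j = (\<Sum>v\<in>{v. length v = m}. complex_of_real (sig_rev \<gamma> v T) * prodM (Mw w0 n) (rev v) $ i $ j)"

lemma dev_entry:
  "dev_term (\<lambda>x. Mw w0 n (c *\<^sub>R x)) \<gamma> m T $ i $ j = complex_of_real (c ^ m) * ent w0 n m i j"
proof -
  have "dev_term (\<lambda>x. Mw w0 n (c *\<^sub>R x)) \<gamma> m T =
     (\<Sum>v\<in>{v. length v = m}. sig_rev \<gamma> v T *\<^sub>R prodM (\<lambda>x. Mw w0 n (c *\<^sub>R x)) (rev v))"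
    using dev_formula[OF Mc_linear, where t = T and n = m] T0 by simp
  also have "\<dots> = (\<Sum>v\<in>{v. length v = m}. sig_rev \<gamma> v T *\<^sub>R ((c ^ m) *\<^sub>R prodM (Mw w0 n) (rev v)))"
    by (intro sum.cong) (auto simp: prodM_scale)
  finally have eq: "dev_term (\<lambda>x. Mw w0 n (c *\<^sub>R x)) \<gamma> m T =
      (\<Sum>v\<in>{v. length v = m}. sig_rev \<gamma> v T *\<^sub>R ((c ^ m) *\<^sub>R prodM (Mw w0 n) (rev v)))" .
  show ?thesis
    unfolding eq ent_def sum_component vector_scaleR_component cscale2 sum_distrib_left
    by (simp add: mult.left_commute)
qed

definition "Q = real CARD('d) * R * real CARD('k::{finite,linorder})"

lemma ent_bound: "norm (ent w0 n m i (j::'k::{finite,linorder})) \<le> (real CARD('d) * R * real CARD('k)) ^ m"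
proof -
  have "norm (ent w0 n m i j) \<le> (\<Sum>v\<in>{v::'d list. length v = m}. norm (complex_of_real (sig_rev \<gamma> v T) * prodM (Mw w0 n) (rev v) $ i $ j))"
    unfolding ent_def by (rule norm_sum)
  also have "\<dots> \<le> (\<Sum>v\<in>{v::'d list. length v = m}. R ^ m * real CARD('k) ^ m)"
  proof (rule sum_mono)
    fix v :: "'d list" assume v: "v \<in> {v. length v = m}"
    have "\<bar>sig_rev \<gamma> v T\<bar> \<le> R ^ m" using sig_bound[of T v] T0 v by simp
    moreover have "norm (prodM (Mw w0 n) (rev v) $ i $ j) \<le> real CARD('k) ^ m"
      using prodM_bound[of w0 n "rev v" i j] v by simp
    ultimately show "norm (complex_of_real (sig_rev \<gamma> v T) * prodM (Mw w0 n) (rev v) $ i $ j) \<le> R ^ m * real CARD('k) ^ m"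
      unfolding norm_mult by (intro mult_mono) auto
  qed
  also have "\<dots> = real (card {v::'d list. length v = m}) * (R ^ m * real CARD('k) ^ m)" by simp
  also have "card {v::'d list. length v = m} = CARD('d) ^ m"
    using card_lists_length_eq[of "UNIV :: 'd set" m] by simp
  finally show ?thesis by (simp add: power_mult_distrib)
qed

lemma ent_low:
  assumes "m < n" "idx_pos i = 0" "idx_pos j = n"
  shows "ent w0 n m i j = 0"
  unfolding ent_def using prodM_zero[of i "rev _" j w0 n] assms by (intro sum.neutral) auto

lemma ent_n:
  assumes "length w0 = n" "idx_pos i = 0" "idx_pos j = n"
  shows "ent w0 n n i j = complex_of_real (sig_rev \<gamma> (rev w0) T)"
proof -
  have "prodM (Mw w0 n) (rev v) $ i $ j = (if v = rev w0 then 1 else 0)" if "length v = n" for v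
  proof -
    have "prodM (Mw w0 n) (rev v) $ i $ j = (if (\<forall>l<n. l < n \<and> rev v ! l = w0 ! l) then 1 else 0)"
      using prodM_diag[of j i "rev v" w0 n] assms that by simp
    also have "(\<forall>l<n. l < n \<and> rev v ! l = w0 ! l) \<longleftrightarrow> rev v = w0"
      using that assms(1) by (auto simp: list_eq_iff_nth_eq)
    finally show ?thesis by auto
  qed
  then have "ent w0 n n i j = (\<Sum>v\<in>{v. length v = n}. if v = rev w0 then complex_of_real (sig_rev \<gamma> v T) else 0)"
    unfolding ent_def by (intro sum.cong) auto
  also have "\<dots> = complex_of_real (sig_rev \<gamma> (rev w0) T)"
    using assms(1) words_finite[of n] by (subst sum.delta) auto
  finally show ?thesis .
qed

lemma dev_summable_entry:
  fixes i j :: "'k::{finite,linorder}"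
  assumes c: "\<bar>c\<bar> * (real CARD('d) * R * real CARD('k)) \<le> 1 / 2"
  shows "summable (\<lambda>m. complex_of_real (c ^ m) * ent w0 n m i j)"
    and "development \<gamma> T (\<lambda>x. Mw w0 n (c *\<^sub>R x)) $ i $ j = (\<Sum>m. complex_of_real (c ^ m) * ent w0 n m i j)"
proof -
  let ?Q = "real CARD('d) * R * real CARD('k)"
  have Q0: "0 \<le> ?Q" using R0 by simp
  have entb: "norm (complex_of_real (c ^ m) * ent w0 n m i' j') \<le> (1 / 2) ^ m" for m and i' j' :: 'k
  proof -
    have "norm (complex_of_real (c ^ m) * ent w0 n m i' j') \<le> \<bar>c\<bar> ^ m * ?Q ^ m"
      unfolding norm_mult using ent_bound[of w0 n m i' j'] by (intro mult_mono) (auto simp: norm_power)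
    also have "\<dots> = (\<bar>c\<bar> * ?Q) ^ m" by (simp add: power_mult_distrib)
    also have "\<dots> \<le> (1 / 2) ^ m" using c Q0 by (intro power_mono) auto
    finally show ?thesis .
  qed
  have g: "summable (\<lambda>m. (1 / 2 :: real) ^ m)" by (rule summable_geometric) simp
  show "summable (\<lambda>m. complex_of_real (c ^ m) * ent w0 n m i j)"
    by (rule summable_comparison_test[OF _ g]) (use entb in auto)
  define D where "D m = (dev_term (\<lambda>x. Mw w0 n (c *\<^sub>R x)) \<gamma> m T :: ((complex, 'k) vec, 'k) vec)" for m
  have Db: "norm (D m) \<le> real CARD('k) * real CARD('k) * (1 / 2) ^ m" for m
  proof -
    have "norm (D m) \<le> (\<Sum>i'\<in>UNIV. norm (D m $ i'))" by (rule norm_vec_le_sum)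
    also have "\<dots> \<le> (\<Sum>i'\<in>(UNIV::'k set). \<Sum>j'\<in>(UNIV::'k set). norm (D m $ i' $ j'))"
      by (intro sum_mono norm_vec_le_sum)
    also have "\<dots> \<le> (\<Sum>i'\<in>(UNIV::'k set). \<Sum>j'\<in>(UNIV::'k set). (1 / 2) ^ m)"
      unfolding D_def dev_entry using entb by (intro sum_mono) auto
    also have "\<dots> = real CARD('k) * real CARD('k) * (1 / 2) ^ m" by simp
    finally show ?thesis .
  qed
  have sD: "summable D"
    by (rule summable_comparison_test[OF _ summable_mult[OF g]]) (use Db in auto)
  have "(\<lambda>m. D m $ i $ j) sums (suminf D $ i $ j)"
    using bounded_linear.sums[OF bounded_linear_vec_nth bounded_linear.sums[OF bounded_linear_vec_nth summable_sums[OF sD]]] .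
  then have "suminf D $ i $ j = (\<Sum>m. D m $ i $ j)" by (simp add: sums_iff)
  then show "development \<gamma> T (\<lambda>x. Mw w0 n (c *\<^sub>R x)) $ i $ j = (\<Sum>m. complex_of_real (c ^ m) * ent w0 n m i j)"
    unfolding development_def D_def dev_entry .
qed

end

(* ---- part P11 ---- *)
lemma tail_bound:
  fixes x :: real and f :: "nat \<Rightarrow> complex"
  assumes x: "0 \<le> x" "x \<le> 1 / 2" and fb: "\<And>m. norm (f m) \<le> 2 * x ^ m"
  shows "norm (\<Sum>m. f (m + k)) \<le> 4 * x ^ k"
proof -
  have g: "summable (\<lambda>m. x ^ m)" using x by (intro summable_geometric) auto
  have "norm (\<Sum>m. f (m + k)) \<le> (\<Sum>m. (2 * x ^ k) * x ^ m)"
  proof (rule norm_suminf_le)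
    show "norm (f (m + k)) \<le> 2 * x ^ k * x ^ m" for m using fb[of "m + k"] by (simp add: power_add mult_ac)
    show "summable (\<lambda>m. 2 * x ^ k * x ^ m)" using g by (rule summable_mult)
  qed
  also have "\<dots> = (2 * x ^ k) * (1 / (1 - x))"
    using suminf_mult[OF g, of "2 * x ^ k"] suminf_geometric[of x] x by simp
  also have "\<dots> \<le> (2 * x ^ k) * 2"
  proof -
    have "1 / (1 - x) \<le> 2" using x by (simp add: field_simps)
    then show ?thesis using x by (intro mult_left_mono) auto
  qed
  finally show ?thesis by simp
qed

theorem corollary5p1:
  fixes p T :: real and n :: nat
    and h :: "((complex, 'k::{finite,linorder}) vec, 'k) vec set"
    and \<gamma>1 \<gamma>2 :: "real \<Rightarrow> real^'d"
  assumes "1 \<le> p" and "p < 2"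
    and "matrix_lie_algebra h" and "tk_real \<subseteq> h"
    and "0 < T"
    and "continuous_on {0..T} \<gamma>1" and "bounded_p_variation p \<gamma>1 0 T"
    and "continuous_on {0..T} \<gamma>2" and "bounded_p_variation p \<gamma>2 0 T"
    and "sig_level \<gamma>1 T n \<noteq> sig_level \<gamma>2 T n"
    and "CARD('k) \<ge> n + 1"
  shows "\<exists>M :: real^'d \<Rightarrow> ((complex, 'k) vec, 'k) vec. linear M \<and> range M \<subseteq> h \<and>
           development \<gamma>1 T M \<noteq> development \<gamma>2 T M"
proof (rule ccontr)
  assume neg: "\<not> (\<exists>M :: real^'d \<Rightarrow> ((complex, 'k) vec, 'k) vec. linear M \<and> range M \<subseteq> h \<and>
           development \<gamma>1 T M \<noteq> development \<gamma>2 T M)"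
  interpret S1: sigctx p T \<gamma>1 using assms by unfold_locales auto
  interpret S2: sigctx p T \<gamma>2 using assms by unfold_locales auto
  obtain w0 where w0: "length w0 = n" "sig_coord \<gamma>1 T w0 \<noteq> sig_coord \<gamma>2 T w0"
  proof -
    obtain w where "sig_level \<gamma>1 T n w \<noteq> sig_level \<gamma>2 T n w" using assms(10) by (meson ext)
    then show ?thesis using that by (auto simp: sig_level_def split: if_splits)
  qed
  have nk: "n < CARD('k)" using assms(11) by simp
  obtain i0 :: 'k where i0: "idx_pos i0 = 0" using idx_pos_surj[of 0] nk by auto
  obtain j0 :: 'k where j0: "idx_pos j0 = n" using idx_pos_surj[of n] nk by auto
  define Rm where "Rm = max S1.R S2.R"
  define Q where "Q = real CARD('d) * Rm * real CARD('k)"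
  have Rm1: "1 \<le> Rm" using S1.R1 by (simp add: Rm_def)
  have Q1: "1 \<le> Q"
  proof -
    have "1 \<le> real CARD('d)" "1 \<le> real CARD('k)" by (simp_all add: Suc_le_eq)
    then have "1 * 1 * 1 \<le> real CARD('d) * Rm * real CARD('k)" using Rm1 by (intro mult_mono) auto
    then show ?thesis by (simp add: Q_def)
  qed
  have QR1: "real CARD('d) * S1.R * real CARD('k) \<le> Q" and QR2: "real CARD('d) * S2.R * real CARD('k) \<le> Q"
    unfolding Q_def Rm_def by (auto intro!: mult_right_mono mult_left_mono)
  have eb1: "norm (S1.ent w0 n m i0 j0) \<le> Q ^ m" for m
    using S1.ent_bound[of w0 n m i0 j0] power_mono[OF QR1, of m] S1.R0 by (simp add: order_trans)
  have eb2: "norm (S2.ent w0 n m i0 j0) \<le> Q ^ m" for m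
    using S2.ent_bound[of w0 n m i0 j0] power_mono[OF QR2, of m] S2.R0 by (simp add: order_trans)
  define \<Delta> where "\<Delta> m = S1.ent w0 n m i0 j0 - S2.ent w0 n m i0 j0" for m
  have Db: "norm (\<Delta> m) \<le> 2 * Q ^ m" for m
    using norm_triangle_ineq4[of "S1.ent w0 n m i0 j0" "S2.ent w0 n m i0 j0"] eb1[of m] eb2[of m]
    by (simp add: \<Delta>_def)
  have Dlow: "\<Delta> m = 0" if "m < n" for m
    using S1.ent_low[OF that i0 j0] S2.ent_low[OF that i0 j0] by (simp add: \<Delta>_def)
  have Dn: "\<Delta> n = complex_of_real (sig_coord \<gamma>1 T w0 - sig_coord \<gamma>2 T w0)"
    using S1.ent_n[OF w0(1) i0 j0] S2.ent_n[OF w0(1) i0 j0] by (simp add: \<Delta>_def sig_coord_def)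
  define dn where "dn = norm (\<Delta> n)"
  have dn0: "0 < dn" using w0(2) by (simp add: dn_def Dn)
  define c where "c = min (1 / (2 * Q)) (dn / (8 * Q ^ Suc n))"
  have Q0: "0 < Q" using Q1 by simp
  have c0: "0 < c" using Q0 dn0 by (simp add: c_def)
  have cQ: "c * Q \<le> 1 / 2"
  proof -
    have "c \<le> 1 / (2 * Q)" by (simp add: c_def)
    then have "c * Q \<le> 1 / (2 * Q) * Q" using Q0 by (intro mult_right_mono) auto
    then show ?thesis using Q0 by simp
  qed
  have ac: "\<bar>c\<bar> = c" using c0 by simp
  have "c * (real CARD('d) * S1.R * real CARD('k)) \<le> c * Q" by (rule mult_left_mono[OF QR1]) (use c0 in simp)
  then have c1: "\<bar>c\<bar> * (real CARD('d) * S1.R * real CARD('k)) \<le> 1 / 2"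
    unfolding ac using cQ by linarith
  have "c * (real CARD('d) * S2.R * real CARD('k)) \<le> c * Q" by (rule mult_left_mono[OF QR2]) (use c0 in simp)
  then have c2: "\<bar>c\<bar> * (real CARD('d) * S2.R * real CARD('k)) \<le> 1 / 2"
    unfolding ac using cQ by linarith
  define Mc where "Mc = (\<lambda>x. (Mw w0 n (c *\<^sub>R x) :: ((complex, 'k) vec, 'k) vec))"
  have "linear Mc" unfolding Mc_def by (rule Mc_linear)
  moreover have "range Mc \<subseteq> h" using Mw_tk assms(4) by (auto simp: Mc_def)
  ultimately have "development \<gamma>1 T Mc = development \<gamma>2 T Mc" using neg by blast
  then have "development \<gamma>1 T Mc $ i0 $ j0 = development \<gamma>2 T Mc $ i0 $ j0" by simp
  then have eqs: "(\<Sum>m. complex_of_real (c ^ m) * S1.ent w0 n m i0 j0) = (\<Sum>m. complex_of_real (c ^ m) * S2.ent w0 n m i0 j0)"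
    unfolding Mc_def S1.dev_summable_entry(2)[OF c1] S2.dev_summable_entry(2)[OF c2] .
  define f where "f m = complex_of_real (c ^ m) * \<Delta> m" for m
  have s1: "summable (\<lambda>m. complex_of_real (c ^ m) * S1.ent w0 n m i0 j0)"
    by (rule S1.dev_summable_entry(1)[OF c1])
  have s2: "summable (\<lambda>m. complex_of_real (c ^ m) * S2.ent w0 n m i0 j0)"
    by (rule S2.dev_summable_entry(1)[OF c2])
  have feq: "f = (\<lambda>m. complex_of_real (c ^ m) * S1.ent w0 n m i0 j0 - complex_of_real (c ^ m) * S2.ent w0 n m i0 j0)"
    by (simp add: fun_eq_iff f_def \<Delta>_def right_diff_distrib)
  have sf: "summable f" unfolding feq by (rule summable_diff[OF s1 s2])
  have "suminf f = 0" unfolding feq suminf_diff[OF s1 s2, symmetric] eqs by simp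
  moreover have "suminf f = (\<Sum>m. f (m + Suc n)) + sum f {..<Suc n}"
    by (rule suminf_split_initial_segment[OF sf])
  moreover have "sum f {..<Suc n} = f n"
    using Dlow by (simp add: f_def)
  ultimately have fn: "f n = - (\<Sum>m. f (m + Suc n))" by (simp add: eq_neg_iff_add_eq_0 add.commute)
  have fb: "norm (f m) \<le> 2 * (c * Q) ^ m" for m
  proof -
    have "norm (f m) = c ^ m * norm (\<Delta> m)" using c0 by (simp add: f_def norm_mult norm_power)
    also have "\<dots> \<le> c ^ m * (2 * Q ^ m)" using Db[of m] c0 by (intro mult_left_mono) auto
    also have "\<dots> = 2 * (c * Q) ^ m" by (simp add: power_mult_distrib)
    finally show ?thesis .
  qed
  have "norm (f n) \<le> 4 * (c * Q) ^ Suc n"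
    unfolding fn norm_minus_cancel using tail_bound[of "c * Q" f "Suc n"] cQ c0 Q0 fb by simp
  moreover have "norm (f n) = c ^ n * dn" using c0 by (simp add: f_def dn_def norm_mult norm_power)
  ultimately have "c ^ n * dn \<le> c ^ n * (4 * c * Q ^ Suc n)"
    by (simp add: power_mult_distrib mult_ac)
  then have "dn \<le> 4 * c * Q ^ Suc n" using c0 by simp
  also have "\<dots> \<le> 4 * (dn / (8 * Q ^ Suc n)) * Q ^ Suc n"
    using Q0 by (intro mult_right_mono mult_left_mono) (auto simp: c_def)
  also have "\<dots> = dn / 2" using Q0 by simp
  finally show False using dn0 by simp
qed

end
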